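(* For every $n\ge 1$, the peak algebra $\mathcal{P}_n$ is a subalgebra of the descent algebra $\Sigma(A_{n-1})$ of $\mathfrak{S}_n$. Moreover, $\mathcal{P}_n=\varphi(\Sigma(B_n))=\psi(\Sigma(D_n))$.
   Context: $[m]=\{1,\dots,m\}$. $\mathfrak{S}_n$ is the symmetric group; $u\in\mathfrak{S}_n$ is written $u_1\dots u_n$ with $u_i=u(i)$; group algebras are over $\mathbb{Q}$ with product given by composition $(uv)(i)=u(v(i))$. For $u\in\mathfrak{S}_n$, $\mathrm{Des}(u)=\{i\in[n-1]: u_i>u_{i+1}\}$, and for $J\subseteq[n-1]$, $Y_J=\sum_{\mathrm{Des}(u)=J}u$; $\Sigma(A_{n-1})$ is the span of the $Y_J$. $B_n$ is the group of signed permutations: bijections $w$ of $\{\pm1,\dots,\pm n\}$ with $w(-i)=-w(i)$, written $w_1\dots w_n$, $w_i=w(i)$; these values are ordered $\cdots<-2<-1<1<2<\cdots$ and one sets $w_0=0$. $\mathrm{Des}(w)=\{i\in\{0,\dots,n-1\}: w_i>w_{i+1}\}$, and $\Sigma(B_n)$ is the span in $\mathbb{Q}B_n$ of $Y_J=\sum_{\mathrm{Des}(w)=J}w$, $J\subseteq\{0,\dots,n-1\}$. $D_n\subseteq B_n$ is the subgroup of signed permutations with an even number of negative entries; for $w\in D_n$, its descent set is the subset of $\{1',1,2,\dots,n-1\}$ where $1'$ is a descent iff $-w_1>w_2$ and $i\in[n-1]$ is a descent iff $w_i>w_{i+1}$; $\Sigma(D_n)$ is the span of $Y_J=\sum_{\mathrm{Des}(w)=J}w$,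 $J\subseteq\{1',1,\dots,n-1\}$. $\varphi:\mathbb{Q}B_n\to\mathbb{Q}\mathfrak{S}_n$ is the linear extension of forgetting signs, $w\mapsto |w_1|\dots|w_n|$, and $\psi$ is its restriction to $\mathbb{Q}D_n$. For $u\in\mathfrak{S}_n$, $\mathrm{Peak}(u)=\{i\in[n-1]: u_{i-1}<u_i>u_{i+1}\}$ with convention $u_0=0$. $\mathcal{F}_n$ is the set of subsets of $[n-1]$ containing no two consecutive integers, $P_F=\sum_{\mathrm{Peak}(u)=F}u$ for $F\in\mathcal{F}_n$, and $\mathcal{P}_n=\mathrm{span}\{P_F: F\in\mathcal{F}_n\}$. *)

theory Defs
  imports Complex_Main
begin

text \<open>Permutations u in S_n are words (lists) u_1...u_n; u_i = u ! (i-1).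
  Signed permutations are int lists. Elements of group algebras over Q are
  functions from words to rat (supported on the group).\<close>

definition perms :: "nat \<Rightarrow> nat list set" where
  "perms n = {u. length u = n \<and> set u = {1..n}}"

definition sperms :: "nat \<Rightarrow> int list set" where
  "sperms n = {w. length w = n \<and> set (map (\<lambda>x. nat \<bar>x\<bar>) w) = {1..n}}"

definition dperms :: "nat \<Rightarrow> int list set" where
  "dperms n = {w \<in> sperms n. even (length (filter (\<lambda>x. x < 0) w))}"

definition compose :: "nat list \<Rightarrow> nat list \<Rightarrow> nat list" where
  "compose u v = map (\<lambda>j. u ! (j - 1)) v"

definition idperm :: "nat \<Rightarrow> nat list" where
  "idperm n = [1..<n+1]"

definition unitA :: "nat \<Rightarrow> nat list \<Rightarrow> rat" where
  "unitA n = (\<lambda>u. if u = idperm n then 1 else 0)"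

definition multA :: "nat \<Rightarrow> (nat list \<Rightarrow> rat) \<Rightarrow> (nat list \<Rightarrow> rat) \<Rightarrow> nat list \<Rightarrow> rat" where
  "multA n f g = (\<lambda>w. \<Sum>u\<in>perms n. \<Sum>v\<in>perms n.
      if compose u v = w then f u * g v else 0)"

definition valA :: "nat list \<Rightarrow> nat \<Rightarrow> nat" where
  "valA u i = (if i = 0 then 0 else u ! (i - 1))"

definition valB :: "int list \<Rightarrow> nat \<Rightarrow> int" where
  "valB w i = (if i = 0 then 0 else w ! (i - 1))"

definition DesA :: "nat \<Rightarrow> nat list \<Rightarrow> nat set" where
  "DesA n u = {i \<in> {1..n-1}. valA u i > valA u (i+1)}"

definition DesB :: "nat \<Rightarrow> int list \<Rightarrow> nat set" where
  "DesB n w = {i \<in> {0..n-1}. valB w i > valB w (i+1)}"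

text \<open>Type D descent set; the index 1' is encoded as 0. 1' is only an index when n \<ge> 2.\<close>
definition DesD :: "nat \<Rightarrow> int list \<Rightarrow> nat set" where
  "DesD n w = {i \<in> {1..n-1}. valB w i > valB w (i+1)}
     \<union> (if n \<ge> 2 \<and> - valB w 1 > valB w 2 then {0} else {})"

definition YA :: "nat \<Rightarrow> nat set \<Rightarrow> nat list \<Rightarrow> rat" where
  "YA n J = (\<lambda>u. if u \<in> perms n \<and> DesA n u = J then 1 else 0)"

definition YB :: "nat \<Rightarrow> nat set \<Rightarrow> int list \<Rightarrow> rat" where
  "YB n J = (\<lambda>w. if w \<in> sperms n \<and> DesB n w = J then 1 else 0)"

definition YD :: "nat \<Rightarrow> nat set \<Rightarrow> int list \<Rightarrow> rat" where
  "YD n J = (\<lambda>w. if w \<in> dperms n \<and> DesD n w = J then 1 else 0)"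

definition SigmaA :: "nat \<Rightarrow> (nat list \<Rightarrow> rat) set" where
  "SigmaA n = {f. \<exists>c. f = (\<lambda>u. \<Sum>J\<in>Pow {1..n-1}. c J * YA n J u)}"

definition SigmaB :: "nat \<Rightarrow> (int list \<Rightarrow> rat) set" where
  "SigmaB n = {f. \<exists>c. f = (\<lambda>w. \<Sum>J\<in>Pow {0..n-1}. c J * YB n J w)}"

text \<open>index set {1',1,...,n-1} with 1' encoded as 0 (for n = 1 it is just [n-1] = {})\<close>
definition DIdx :: "nat \<Rightarrow> nat set" where
  "DIdx n = (if n \<ge> 2 then {0..n-1} else {})"

definition SigmaD :: "nat \<Rightarrow> (int list \<Rightarrow> rat) set" where
  "SigmaD n = {f. \<exists>c. f = (\<lambda>w. \<Sum>J\<in>Pow (DIdx n). c J * YD n J w)}"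

definition forget :: "int list \<Rightarrow> nat list" where
  "forget w = map (\<lambda>x. nat \<bar>x\<bar>) w"

definition phi :: "nat \<Rightarrow> (int list \<Rightarrow> rat) \<Rightarrow> nat list \<Rightarrow> rat" where
  "phi n f = (\<lambda>u. \<Sum>w\<in>{w \<in> sperms n. forget w = u}. f w)"

definition psi :: "nat \<Rightarrow> (int list \<Rightarrow> rat) \<Rightarrow> nat list \<Rightarrow> rat" where
  "psi n f = (\<lambda>u. \<Sum>w\<in>{w \<in> dperms n. forget w = u}. f w)"

definition Peak :: "nat \<Rightarrow> nat list \<Rightarrow> nat set" where
  "Peak n u = {i \<in> {1..n-1}. valA u (i-1) < valA u i \<and> valA u i > valA u (i+1)}"

definition Fn :: "nat \<Rightarrow> nat set set" where
  "Fn n = {F. F \<subseteq> {1..n-1} \<and> (\<forall>i\<in>F. i + 1 \<notin> F)}"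

definition PF :: "nat \<Rightarrow> nat set \<Rightarrow> nat list \<Rightarrow> rat" where
  "PF n F = (\<lambda>u. if u \<in> perms n \<and> Peak n u = F then 1 else 0)"

definition PeakAlg :: "nat \<Rightarrow> (nat list \<Rightarrow> rat) set" where
  "PeakAlg n = {f. \<exists>c. f = (\<lambda>u. \<Sum>F\<in>Fn n. c F * PF n F u)}"

end

theory Submission
  imports Defs
begin


section \<open>Generic class-function spaces\<close>

definition cls :: "'a set \<Rightarrow> ('a \<Rightarrow> 'b) \<Rightarrow> 'b set \<Rightarrow> ('a \<Rightarrow> rat) set" where
  "cls P k I = {f. \<exists>c. f = (\<lambda>u. \<Sum>J\<in>I. c J * (if u \<in> P \<and> k u = J then 1 else 0))}"

definition cfun :: "'a set \<Rightarrow> ('a \<Rightarrow> 'b) \<Rightarrow> ('a \<Rightarrow> rat) set" where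
  "cfun P k = {f. (\<forall>u. u \<notin> P \<longrightarrow> f u = 0) \<and> (\<forall>u\<in>P. \<forall>v\<in>P. k u = k v \<longrightarrow> f u = f v)}"

lemma sum_indicator_single:
  assumes "finite I" "j \<in> I"
  shows "(\<Sum>J\<in>I. c J * (if j = J then 1 else (0::rat))) = c j"
proof -
  have "(\<Sum>J\<in>I. c J * (if j = J then 1 else (0::rat))) = (\<Sum>J\<in>I. if J = j then c J else 0)"
    by (rule sum.cong) auto
  also have "\<dots> = c j" using assms by simp
  finally show ?thesis .
qed

lemma cls_eq_cfun:
  assumes fin: "finite I" and kin: "\<And>u. u \<in> P \<Longrightarrow> k u \<in> I"
  shows "cls P k I = cfun P k"
proof
  show "cls P k I \<subseteq> cfun P k"
  proof
    fix f assume "f \<in> cls P k I"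
    then obtain c where c: "f = (\<lambda>u. \<Sum>J\<in>I. c J * (if u \<in> P \<and> k u = J then 1 else 0))"
      unfolding cls_def by auto
    have v: "f u = c (k u)" if "u \<in> P" for u
    proof -
      have "f u = (\<Sum>J\<in>I. c J * (if u \<in> P \<and> k u = J then 1 else 0))" using c by simp
      also have "\<dots> = (\<Sum>J\<in>I. c J * (if k u = J then 1 else 0))" using that by simp
      also have "\<dots> = c (k u)" by (rule sum_indicator_single[OF fin kin[OF that]])
      finally show ?thesis .
    qed
    have z: "f u = 0" if "u \<notin> P" for u using that c by simp
    show "f \<in> cfun P k" unfolding cfun_def using v z by auto
  qed
next
  show "cfun P k \<subseteq> cls P k I"
  proof
    fix f assume f: "f \<in> cfun P k"
    define c where "c J = (if \<exists>u\<in>P. k u = J then f (SOME u. u \<in> P \<and> k u = J) else 0)" for J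
    have "f u = (\<Sum>J\<in>I. c J * (if u \<in> P \<and> k u = J then 1 else 0))" for u
    proof (cases "u \<in> P")
      case True
      have "(\<Sum>J\<in>I. c J * (if u \<in> P \<and> k u = J then 1 else 0)) = (\<Sum>J\<in>I. c J * (if k u = J then 1 else 0))"
        using True by simp
      also have "\<dots> = c (k u)" by (rule sum_indicator_single[OF fin kin[OF True]])
      also have "\<dots> = f (SOME v. v \<in> P \<and> k v = k u)" unfolding c_def using True by auto
      also have "\<dots> = f u"
      proof -
        have "\<exists>v. v \<in> P \<and> k v = k u" using True by auto
        then have "(SOME v. v \<in> P \<and> k v = k u) \<in> P \<and> k (SOME v. v \<in> P \<and> k v = k u) = k u"
          by (rule someI_ex)
        then show ?thesis using f True unfolding cfun_def by blast
      qed
      finally show ?thesis by simp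
    next
      case False
      then show ?thesis using f unfolding cfun_def by simp
    qed
    then show "f \<in> cls P k I" unfolding cls_def by blast
  qed
qed

lemma cfun_add:
  assumes "f \<in> cfun P k" "g \<in> cfun P k" shows "(\<lambda>u. f u + g u) \<in> cfun P k"
proof -
  have "f u + g u = f v + g v" if "u \<in> P" "v \<in> P" "k u = k v" for u v
  proof -
    have "f u = f v" using assms(1) that unfolding cfun_def by blast
    moreover have "g u = g v" using assms(2) that unfolding cfun_def by blast
    ultimately show ?thesis by simp
  qed
  moreover have "f u + g u = 0" if "u \<notin> P" for u
  proof -
    have "f u = 0" "g u = 0" using assms that unfolding cfun_def by blast+
    then show ?thesis by simp
  qed
  ultimately show ?thesis unfolding cfun_def by blast
qed
lemma cfun_smult:
  assumes "f \<in> cfun P k" shows "(\<lambda>u. a * f u) \<in> cfun P k"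
proof -
  have "a * f u = a * f v" if "u \<in> P" "v \<in> P" "k u = k v" for u v
  proof -
    have "f u = f v" using assms(1) that unfolding cfun_def by blast
    then show ?thesis by simp
  qed
  moreover have "a * f u = 0" if "u \<notin> P" for u
  proof -
    have "f u = 0" using assms that unfolding cfun_def by blast
    then show ?thesis by simp
  qed
  ultimately show ?thesis unfolding cfun_def by blast
qed
lemma cfun_zero: "(\<lambda>u. 0) \<in> cfun P k"
  unfolding cfun_def by auto

definition subsp :: "('a \<Rightarrow> rat) set \<Rightarrow> bool" where
  "subsp V \<longleftrightarrow> (\<lambda>u. 0) \<in> V \<and> (\<forall>f\<in>V. \<forall>g\<in>V. (\<lambda>u. f u + g u) \<in> V) \<and> (\<forall>f\<in>V. \<forall>a. (\<lambda>u. a * f u) \<in> V)"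

lemma subsp_add: "subsp V \<Longrightarrow> f \<in> V \<Longrightarrow> g \<in> V \<Longrightarrow> (\<lambda>u. f u + g u) \<in> V"
  unfolding subsp_def by blast
lemma subsp_smult: "subsp V \<Longrightarrow> f \<in> V \<Longrightarrow> (\<lambda>u. a * f u) \<in> V"
  unfolding subsp_def by blast
lemma subsp_zero: "subsp V \<Longrightarrow> (\<lambda>u. 0) \<in> V"
  unfolding subsp_def by blast

lemma subsp_cfun: "subsp (cfun P k)"
  unfolding subsp_def using cfun_add cfun_smult cfun_zero by blast

lemma subsp_sum:
  assumes "subsp V" "finite A" "\<And>x. x \<in> A \<Longrightarrow> g x \<in> V"
  shows "(\<lambda>u. \<Sum>x\<in>A. c x * g x u) \<in> V"
  using assms(2,3)
proof (induction A rule: finite_induct)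
  case empty
  then show ?case using assms(1) unfolding subsp_def by simp
next
  case (insert x F)
  have a: "(\<lambda>u. c x * g x u) \<in> V" using insert assms(1) unfolding subsp_def by blast
  have b: "(\<lambda>u. \<Sum>x\<in>F. c x * g x u) \<in> V" using insert by blast
  have "(\<lambda>u. (\<lambda>u. c x * g x u) u + (\<lambda>u. \<Sum>x\<in>F. c x * g x u) u) \<in> V"
    using subsp_add[OF assms(1) a b] by simp
  then show ?case using insert by simp
qed

lemma subsp_image:
  assumes "subsp V"
    and add: "\<And>f g. T (\<lambda>u. f u + g u) = (\<lambda>u. T f u + T g u)"
    and sm: "\<And>f a. T (\<lambda>u. a * f u) = (\<lambda>u. a * T f u)"
  shows "subsp (T ` V)"
proof -
  have z: "T (\<lambda>u. 0) = (\<lambda>u. 0)"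
    using sm[where f="\<lambda>u. 0" and a=0] by simp
  have "T (\<lambda>u. 0) \<in> T ` V" using subsp_zero[OF assms(1)] by blast
  then have "(\<lambda>u. 0) \<in> T ` V" using z by simp
  moreover have "(\<lambda>u. f u + g u) \<in> T ` V" if hf: "f \<in> T ` V" and hg: "g \<in> T ` V" for f g
  proof -
    obtain f' where f': "f' \<in> V" "f = T f'" using hf by blast
    obtain g' where g': "g' \<in> V" "g = T g'" using hg by blast
    have "(\<lambda>u. f' u + g' u) \<in> V" using subsp_add[OF assms(1) f'(1) g'(1)] .
    then have "T (\<lambda>u. f' u + g' u) \<in> T ` V" by blast
    then show ?thesis using add[of f' g'] f' g' by simp
  qed
  moreover have "(\<lambda>u. a * f u) \<in> T ` V" if hf: "f \<in> T ` V" for f a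
  proof -
    obtain f' where f': "f' \<in> V" "f = T f'" using hf by blast
    have "(\<lambda>u. a * f' u) \<in> V" using subsp_smult[OF assms(1) f'(1)] .
    then have "T (\<lambda>u. a * f' u) \<in> T ` V" by blast
    then show ?thesis using sm[where f=f' and a=a] f' by simp
  qed
  ultimately show ?thesis unfolding subsp_def by blast
qed

lemma triangular:
  assumes V: "subsp V"
    and down: "\<And>F G. F \<in> Fam \<Longrightarrow> G \<subseteq> F \<Longrightarrow> G \<in> Fam"
    and finF: "\<And>F. F \<in> Fam \<Longrightarrow> finite F"
    and ex: "\<And>F. F \<in> Fam \<Longrightarrow> \<exists>a. a F \<noteq> 0 \<and> (\<lambda>u. \<Sum>G\<in>Pow F. a G * Y G u) \<in> V"
  shows "F \<in> Fam \<Longrightarrow> Y F \<in> V"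
proof (induction "card F" arbitrary: F rule: less_induct)
  case less
  obtain a where a: "a F \<noteq> 0" "(\<lambda>u. \<Sum>G\<in>Pow F. a G * Y G u) \<in> V" using ex[OF less.prems] by blast
  have fin: "finite F" using finF less.prems by blast
  have sub: "Y G \<in> V" if "G \<in> Pow F - {F}" for G
  proof -
    have "G \<subset> F" using that by auto
    then have "card G < card F" using fin by (simp add: psubset_card_mono)
    moreover have "G \<in> Fam" using down[OF less.prems] that by auto
    ultimately show ?thesis using less.hyps by blast
  qed
  have s1: "(\<lambda>u. \<Sum>G\<in>Pow F - {F}. (- a G) * Y G u) \<in> V"
    by (rule subsp_sum[OF V]) (use fin sub in auto)
  have s2: "(\<lambda>u. (\<lambda>u. \<Sum>G\<in>Pow F. a G * Y G u) u + (\<lambda>u. \<Sum>G\<in>Pow F - {F}. (- a G) * Y G u) u) \<in> V"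
    using subsp_add[OF V a(2) s1] by simp
  have eq: "(\<Sum>G\<in>Pow F. a G * Y G u) + (\<Sum>G\<in>Pow F - {F}. (- a G) * Y G u) = a F * Y F u" for u
  proof -
    have "(\<Sum>G\<in>Pow F. a G * Y G u) = a F * Y F u + (\<Sum>G\<in>Pow F - {F}. a G * Y G u)"
      using fin by (subst sum.remove[of _ F]) auto
    moreover have "(\<Sum>G\<in>Pow F - {F}. (- a G) * Y G u) = - (\<Sum>G\<in>Pow F - {F}. a G * Y G u)"
      by (simp add: sum_negf)
    ultimately show ?thesis by simp
  qed
  have "(\<lambda>u. a F * Y F u) \<in> V" using s2 eq by simp
  then have "(\<lambda>u. inverse (a F) * (a F * Y F u)) \<in> V" using subsp_smult[OF V] by blast
  moreover have "(\<lambda>u. inverse (a F) * (a F * Y F u)) = Y F" using a(1) by (simp add: fun_eq_iff)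
  ultimately show ?case by simp
qed



lemma perms_D:
  assumes "u \<in> perms n"
  shows "length u = n" "set u = {1..n}" "distinct u"
proof -
  show l: "length u = n" "set u = {1..n}" using assms unfolding perms_def by auto
  then have "card (set u) = length u" by simp
  then show "distinct u" by (rule card_distinct)
qed

lemma perms_nth:
  assumes "u \<in> perms n" "i < n"
  shows "1 \<le> u ! i" "u ! i \<le> n"
proof -
  have "u ! i \<in> set u" using assms perms_D(1)[OF assms(1)] by simp
  then show "1 \<le> u ! i" "u ! i \<le> n" using perms_D(2)[OF assms(1)] by auto
qed

lemma perms_inj:
  assumes "u \<in> perms n" "i < n" "j < n" "u ! i = u ! j"
  shows "i = j"
  using assms perms_D[OF assms(1)] nth_eq_iff_index_eq by metis

lemma valA_pos:
  assumes "u \<in> perms n" "1 \<le> i" "i \<le> n"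
  shows "valA u i \<ge> 1"
  using assms perms_nth[OF assms(1), of "i - 1"] unfolding valA_def by auto

lemma valA_neq:
  assumes "u \<in> perms n" "i < n"
  shows "valA u i \<noteq> valA u (i + 1)"
proof (cases "i = 0")
  case True
  then show ?thesis using valA_pos[OF assms(1), of 1] assms by (auto simp: valA_def)
next
  case False
  have "i - 1 < n" "i - 1 \<noteq> i" using False assms by auto
  then have "u ! (i - 1) \<noteq> u ! i"
    using perms_inj[OF assms(1), of "i - 1" i] assms by blast
  then show ?thesis using False unfolding valA_def by auto
qed

lemma valA0_less:
  assumes "u \<in> perms n" "n \<ge> 1"
  shows "valA u 0 < valA u 1"
  using valA_pos[OF assms(1), of 1] assms by (auto simp: valA_def)

lemma Peak_DesA:
  assumes "u \<in> perms n"
  shows "Peak n u = {i\<in>{1..n-1}. i \<in> DesA n u \<and> (i = 1 \<or> i - 1 \<notin> DesA n u)}"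
proof -
  have "(valA u (i-1) < valA u i \<and> valA u i > valA u (i+1)) \<longleftrightarrow>
        (i \<in> DesA n u \<and> (i = 1 \<or> i - 1 \<notin> DesA n u))" if i: "i \<in> {1..n-1}" for i
  proof -
    have d: "i \<in> DesA n u \<longleftrightarrow> valA u i > valA u (i+1)" using i unfolding DesA_def by auto
    have "valA u (i-1) < valA u i \<longleftrightarrow> (i = 1 \<or> i - 1 \<notin> DesA n u)"
    proof (cases "i = 1")
      case True
      then show ?thesis using valA0_less[OF assms] i by auto
    next
      case False
      then have "i - 1 \<in> {1..n-1}" using i by auto
      then have "i - 1 \<in> DesA n u \<longleftrightarrow> valA u (i-1) > valA u i"
        unfolding DesA_def using i False by auto
      moreover have "valA u (i-1) \<noteq> valA u i"
      proof -
        have "i - 1 < n" "i - 1 + 1 = i" using i False by auto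
        then show ?thesis using valA_neq[OF assms, of "i - 1"] by simp
      qed
      ultimately show ?thesis using False by auto
    qed
    then show ?thesis using d by blast
  qed
  then show ?thesis unfolding Peak_def by blast
qed

lemma Peak_in_Fn:
  assumes "u \<in> perms n"
  shows "Peak n u \<in> Fn n"
proof -
  have "i + 1 \<notin> Peak n u" if "i \<in> Peak n u" for i
    using that unfolding Peak_def by auto
  then show ?thesis unfolding Fn_def Peak_def by auto
qed

lemma finite_Fn: "finite (Fn n)"
proof -
  have "Fn n \<subseteq> Pow {1..n-1}" unfolding Fn_def by auto
  then show ?thesis by (rule finite_subset) simp
qed

lemma Fn_down: "F \<in> Fn n \<Longrightarrow> G \<subseteq> F \<Longrightarrow> G \<in> Fn n"
  unfolding Fn_def by auto

lemma PeakAlg_cfun: "PeakAlg n = cfun (perms n) (Peak n)"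
proof -
  have "PeakAlg n = cls (perms n) (Peak n) (Fn n)"
    unfolding PeakAlg_def PF_def cls_def by simp
  also have "\<dots> = cfun (perms n) (Peak n)"
    by (rule cls_eq_cfun[OF finite_Fn Peak_in_Fn])
  finally show ?thesis .
qed

lemma SigmaA_cfun: "SigmaA n = cfun (perms n) (DesA n)"
proof -
  have "SigmaA n = cls (perms n) (DesA n) (Pow {1..n-1})"
    unfolding SigmaA_def YA_def cls_def by simp
  also have "\<dots> = cfun (perms n) (DesA n)"
    by (rule cls_eq_cfun) (auto simp: DesA_def)
  finally show ?thesis .
qed

theorem part_sub: "PeakAlg n \<subseteq> SigmaA n"
proof
  fix f assume "f \<in> PeakAlg n"
  then have f: "f \<in> cfun (perms n) (Peak n)" using PeakAlg_cfun by simp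
  have "f u = f v" if "u \<in> perms n" "v \<in> perms n" "DesA n u = DesA n v" for u v
  proof -
    have "Peak n u = Peak n v" using that Peak_DesA by simp
    then show ?thesis using f that unfolding cfun_def by blast
  qed
  moreover have "f u = 0" if "u \<notin> perms n" for u using f that unfolding cfun_def by blast
  ultimately show "f \<in> SigmaA n" unfolding SigmaA_cfun cfun_def by blast
qed

lemma idperm_perms: "idperm n \<in> perms n"
  unfolding idperm_def perms_def by auto

lemma Peak_empty_asc:
  assumes u: "u \<in> perms n" and "Peak n u = {}" 
  shows "i < n \<Longrightarrow> valA u i < valA u (i+1)"
proof (induction i)
  case 0
  then show ?case using valA0_less[OF u] by simp
next
  case (Suc i)
  have "valA u (Suc i) < valA u (Suc i + 1)"
  proof (rule ccontr)
    assume "\<not> ?thesis"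
    then have "valA u (Suc i) > valA u (Suc i + 1)" using valA_neq[OF u Suc.prems] by auto
    moreover have "valA u i < valA u (Suc i)" using Suc by simp
    ultimately have "Suc i \<in> Peak n u" unfolding Peak_def using Suc.prems by auto
    then show False using assms by simp
  qed
  then show ?case by simp
qed

lemma Peak_empty_id:
  assumes u: "u \<in> perms n" and p: "Peak n u = {}"
  shows "u = idperm n"
proof -
  have l: "length u = n" using perms_D[OF u] by simp
  have "sorted_wrt (<) u"
  proof (subst sorted_wrt_iff_nth_Suc_transp)
    show "transp ((<) :: nat \<Rightarrow> nat \<Rightarrow> bool)" by (rule transpI) simp
    show "\<forall>i. Suc i < length u \<longrightarrow> u ! i < u ! Suc i"
    proof (intro allI impI)
      fix i assume "Suc i < length u"
      then have "valA u (Suc i) < valA u (Suc i + 1)" using Peak_empty_asc[OF u p, of "Suc i"] l by simp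
      then show "u ! i < u ! Suc i" unfolding valA_def by simp
    qed
  qed
  moreover have "sorted_wrt (<) (idperm n)" unfolding idperm_def by (rule sorted_wrt_upt)
  moreover have "set u = set (idperm n)" using perms_D(2)[OF u] unfolding idperm_def set_upt
    by (simp add: atLeastLessThanSuc_atLeastAtMost)
  ultimately show ?thesis using strict_sorted_equal by blast
qed

lemma Peak_id: "Peak n (idperm n) = {}"
proof -
  have "valA (idperm n) (i+1) > valA (idperm n) i" if "i \<in> {1..n-1}" for i
    using that unfolding valA_def idperm_def by (auto simp: nth_append)
  then show ?thesis unfolding Peak_def by fastforce
qed

theorem part_unit: "unitA n \<in> PeakAlg n"
proof -
  have "unitA n u = unitA n v" if "u \<in> perms n" "v \<in> perms n" "Peak n u = Peak n v" for u v
  proof -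
    have "u = idperm n \<longleftrightarrow> Peak n u = {}" using that Peak_empty_id Peak_id by metis
    moreover have "v = idperm n \<longleftrightarrow> Peak n v = {}" using that Peak_empty_id Peak_id by metis
    ultimately show ?thesis unfolding unitA_def using that(3) by simp
  qed
  moreover have "unitA n u = 0" if "u \<notin> perms n" for u
    using that idperm_perms unfolding unitA_def by auto
  ultimately show ?thesis unfolding PeakAlg_cfun cfun_def by blast
qed



definition lset :: "nat \<Rightarrow> (nat \<Rightarrow> 'a set) \<Rightarrow> 'a list set" where
  "lset n A = {xs. length xs = n \<and> (\<forall>k<n. xs ! k \<in> A k)}"

lemma lset_Suc:
  "lset (Suc n) A = (\<lambda>(x, ys). x # ys) ` (A 0 \<times> lset n (\<lambda>k. A (Suc k)))"
proof (rule set_eqI)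
  fix xs
  show "xs \<in> lset (Suc n) A \<longleftrightarrow> xs \<in> (\<lambda>(x, ys). x # ys) ` (A 0 \<times> lset n (\<lambda>k. A (Suc k)))"
  proof
    assume a: "xs \<in> lset (Suc n) A"
    then obtain x ys where xs: "xs = x # ys" unfolding lset_def by (cases xs) auto
    have "x \<in> A 0" using a xs unfolding lset_def by auto
    moreover have "ys \<in> lset n (\<lambda>k. A (Suc k))" using a xs unfolding lset_def by auto
    ultimately show "xs \<in> (\<lambda>(x, ys). x # ys) ` (A 0 \<times> lset n (\<lambda>k. A (Suc k)))"
      using xs by force
  next
    assume "xs \<in> (\<lambda>(x, ys). x # ys) ` (A 0 \<times> lset n (\<lambda>k. A (Suc k)))"
    then obtain x ys where xs: "xs = x # ys" "x \<in> A 0" "ys \<in> lset n (\<lambda>k. A (Suc k))" by auto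
    show "xs \<in> lset (Suc n) A" unfolding lset_def
    proof (intro CollectI conjI allI impI)
      show "length xs = Suc n" using xs unfolding lset_def by simp
      fix k assume "k < Suc n"
      then show "xs ! k \<in> A k" using xs unfolding lset_def by (cases k) auto
    qed
  qed
qed

lemma lset_finite: "(\<And>k. k < n \<Longrightarrow> finite (A k)) \<Longrightarrow> finite (lset n A)"
proof (induction n arbitrary: A)
  case 0
  have "lset 0 A = {[]}" unfolding lset_def by auto
  then show ?case by simp
next
  case (Suc n)
  have "finite (lset n (\<lambda>k. A (Suc k)))" using Suc by auto
  moreover have "finite (A 0)" using Suc by auto
  ultimately show ?case unfolding lset_Suc by auto
qed

lemma lset_sum_prod:
  fixes f :: "nat \<Rightarrow> 'a \<Rightarrow> 'b::comm_semiring_1"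
  assumes "\<And>k. k < n \<Longrightarrow> finite (A k)"
  shows "(\<Sum>xs\<in>lset n A. \<Prod>k<n. f k (xs ! k)) = (\<Prod>k<n. \<Sum>x\<in>A k. f k x)"
  using assms
proof (induction n arbitrary: A f)
  case 0
  have "lset 0 A = {[]}" unfolding lset_def by auto
  then show ?case by simp
next
  case (Suc n)
  have inj: "inj_on (\<lambda>(x, ys). x # ys) (A 0 \<times> lset n (\<lambda>k. A (Suc k)))"
    by (auto simp: inj_on_def)
  have fin1: "finite (A 0)" using Suc by auto
  have fin2: "finite (lset n (\<lambda>k. A (Suc k)))" by (rule lset_finite) (use Suc in auto)
  have "(\<Sum>xs\<in>lset (Suc n) A. \<Prod>k<Suc n. f k (xs ! k))
      = (\<Sum>p\<in>A 0 \<times> lset n (\<lambda>k. A (Suc k)). \<Prod>k<Suc n. f k ((fst p # snd p) ! k))"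
    unfolding lset_Suc by (subst sum.reindex[OF inj]) (auto intro!: sum.cong)
  also have "\<dots> = (\<Sum>p\<in>A 0 \<times> lset n (\<lambda>k. A (Suc k)). f 0 (fst p) * (\<Prod>k<n. f (Suc k) (snd p ! k)))"
    by (rule sum.cong[OF refl]) (simp only: prod.lessThan_Suc_shift, simp)
  also have "\<dots> = (\<Sum>x\<in>A 0. \<Sum>ys\<in>lset n (\<lambda>k. A (Suc k)). f 0 x * (\<Prod>k<n. f (Suc k) (ys ! k)))"
    by (rule sum.cartesian_product'[where g="\<lambda>p. f 0 (fst p) * (\<Prod>k<n. f (Suc k) (snd p ! k))", simplified])
  also have "\<dots> = (\<Sum>x\<in>A 0. f 0 x * (\<Sum>ys\<in>lset n (\<lambda>k. A (Suc k)). (\<Prod>k<n. f (Suc k) (ys ! k))))"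
    by (simp add: sum_distrib_left)
  also have "\<dots> = (\<Sum>x\<in>A 0. f 0 x) * (\<Prod>k<n. \<Sum>x\<in>A (Suc k). f (Suc k) x)"
    using Suc.IH[of "\<lambda>k. A (Suc k)" "\<lambda>k. f (Suc k)"] Suc.prems by (simp add: sum_distrib_right)
  also have "\<dots> = (\<Prod>k<Suc n. \<Sum>x\<in>A k. f k x)"
    by (simp only: prod.lessThan_Suc_shift)
  finally show ?case .
qed

lemma lset_card:
  assumes "\<And>k. k < n \<Longrightarrow> finite (A k)"
  shows "card (lset n A) = (\<Prod>k<n. card (A k))"
proof -
  have "real (card (lset n A)) = (\<Sum>xs\<in>lset n A. \<Prod>k<n. (\<lambda>k x. 1::real) k (xs ! k))" by simp
  also have "\<dots> = (\<Prod>k<n. \<Sum>x\<in>A k. (\<lambda>k x. 1::real) k x)" by (rule lset_sum_prod[OF assms])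
  also have "\<dots> = real (\<Prod>k<n. card (A k))" by simp
  finally show ?thesis by linarith
qed

definition sg :: "int \<Rightarrow> rat" where "sg x = (if x < 0 then -1 else 1)"

lemma prod_sg: "(\<Prod>k<length w. sg (w ! k)) = (-1) ^ length (filter (\<lambda>x. x < 0) w)"
proof (induction w)
  case Nil
  then show ?case by simp
next
  case (Cons a w)
  have "(\<Prod>k<length (a # w). sg ((a # w) ! k)) = sg a * (\<Prod>k<length w. sg (w ! k))"
    by (simp only: length_Cons prod.lessThan_Suc_shift) simp
  then show ?case using Cons by (simp add: sg_def)
qed

lemma even_count:
  assumes fin: "\<And>k. k < n \<Longrightarrow> finite (A k)"
    and zero: "\<exists>k<n. (\<Sum>x\<in>A k. sg x) = 0"
  shows "2 * card {w \<in> lset n A. even (length (filter (\<lambda>x. x < 0) w))} = card (lset n A)"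
proof -
  let ?E = "{w \<in> lset n A. even (length (filter (\<lambda>x. x < 0) w))}"
  have finL: "finite (lset n A)" by (rule lset_finite[OF fin])
  have "(\<Sum>w\<in>lset n A. \<Prod>k<n. (\<lambda>k. sg) k (w ! k)) = (\<Prod>k<n. \<Sum>x\<in>A k. (\<lambda>k. sg) k x)"
    by (rule lset_sum_prod[OF fin])
  also have "\<dots> = 0" using zero by (simp add: prod_zero_iff) (metis lessThan_iff)
  finally have s0: "(\<Sum>w\<in>lset n A. \<Prod>k<n. sg (w ! k)) = 0" by simp
  have pt: "1 + (\<Prod>k<n. sg (w ! k)) = (if even (length (filter (\<lambda>x. x < 0) w)) then 2 else 0)"
    if "w \<in> lset n A" for w
  proof -
    have "length w = n" using that unfolding lset_def by simp
    then have "(\<Prod>k<n. sg (w ! k)) = (-1) ^ length (filter (\<lambda>x. x < 0) w)" using prod_sg by metis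
    then show ?thesis by simp
  qed
  have "(\<Sum>w\<in>lset n A. 1 + (\<Prod>k<n. sg (w ! k))) = of_nat (card (lset n A))"
    using s0 by (simp add: sum.distrib)
  moreover have "(\<Sum>w\<in>lset n A. 1 + (\<Prod>k<n. sg (w ! k)))
      = (\<Sum>w\<in>lset n A. if even (length (filter (\<lambda>x. x < 0) w)) then 2 else (0::rat))"
    using pt by (rule sum.cong[OF refl])
  moreover have "(\<Sum>w\<in>lset n A. if even (length (filter (\<lambda>x. x < 0) w)) then 2 else (0::rat))
      = 2 * of_nat (card ?E)"
    using finL by (simp add: sum.If_cases Int_def)
  ultimately have "(2::rat) * of_nat (card ?E) = of_nat (card (lset n A))" by simp
  then show ?thesis by linarith
qed

lemma transitions:
  fixes b :: "nat \<Rightarrow> bool"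
  shows "int (card {k. k < m \<and> \<not> b k \<and> b (Suc k)}) - int (card {k. k < m \<and> b k \<and> \<not> b (Suc k)})
         = (if b m then 1 else 0) - (if b 0 then 1 else 0)"
proof (induction m)
  case 0
  then show ?case by simp
next
  case (Suc m)
  have e1: "{k. k < Suc m \<and> \<not> b k \<and> b (Suc k)} = {k. k < m \<and> \<not> b k \<and> b (Suc k)} \<union> (if \<not> b m \<and> b (Suc m) then {m} else {})"
    by (auto simp: less_Suc_eq)
  have e2: "{k. k < Suc m \<and> b k \<and> \<not> b (Suc k)} = {k. k < m \<and> b k \<and> \<not> b (Suc k)} \<union> (if b m \<and> \<not> b (Suc m) then {m} else {})"
    by (auto simp: less_Suc_eq)
  show ?case using Suc unfolding e1 e2 by (auto simp: card_insert_if)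
qed



section \<open>Sign vectors over a permutation\<close>

abbreviation pm :: "nat list \<Rightarrow> nat \<Rightarrow> int set" where
  "pm u k \<equiv> {int (u ! k), - int (u ! k)}"

definition asc :: "nat list \<Rightarrow> nat \<Rightarrow> bool" where
  "asc u i \<longleftrightarrow> valA u i < valA u (i + 1)"

lemma asc0: "u \<in> perms n \<Longrightarrow> n \<ge> 1 \<Longrightarrow> asc u 0"
  using valA0_less unfolding asc_def by simp

lemma sv_eq:
  assumes u: "u \<in> perms n"
  shows "{w \<in> sperms n. forget w = u} = lset n (pm u)"
proof (rule set_eqI, rule iffI)
  fix w assume "w \<in> {w \<in> sperms n. forget w = u}"
  then have w: "length w = n" "map (\<lambda>x. nat \<bar>x\<bar>) w = u" unfolding sperms_def forget_def by auto
  have "w ! k \<in> pm u k" if "k < n" for k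
  proof -
    have "nat \<bar>w ! k\<bar> = u ! k" using w that by (metis nth_map)
    then show ?thesis by auto
  qed
  then show "w \<in> lset n (pm u)" unfolding lset_def using w by auto
next
  fix w assume w: "w \<in> lset n (pm u)"
  have l: "length w = n" using w unfolding lset_def by simp
  have "map (\<lambda>x. nat \<bar>x\<bar>) w = u"
  proof (rule nth_equalityI)
    show "length (map (\<lambda>x. nat \<bar>x\<bar>) w) = length u" using l perms_D[OF u] by simp
    fix k assume "k < length (map (\<lambda>x. nat \<bar>x\<bar>) w)"
    then have k: "k < n" using l by simp
    then have "w ! k \<in> pm u k" using w unfolding lset_def by simp
    then have e: "nat \<bar>w ! k\<bar> = u ! k" by auto
    have "k < length w" using k l by simp
    then have "map (\<lambda>x. nat \<bar>x\<bar>) w ! k = nat \<bar>w ! k\<bar>" by (rule nth_map)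
    then show "map (\<lambda>x. nat \<bar>x\<bar>) w ! k = u ! k" using e by (rule trans)
  qed
  then have fw: "forget w = u" unfolding forget_def .
  have "set (map (\<lambda>x. nat \<bar>x\<bar>) w) = {1..n}" using fw perms_D(2)[OF u] unfolding forget_def by simp
  then have "w \<in> sperms n" unfolding sperms_def using l by simp
  then show "w \<in> {w \<in> sperms n. forget w = u}" using fw by simp
qed

lemma sign_lemma:
  assumes u: "u \<in> perms n" and w: "w \<in> lset n (pm u)" and i: "i < n"
  shows "valB w i > valB w (i + 1) \<longleftrightarrow> (if asc u i then w ! i < 0 else 0 < w ! (i - 1))"
proof (cases "i = 0")
  case True
  have "asc u 0" using asc0[OF u] i by simp
  moreover have "valB w 0 = 0" "valB w 1 = w ! 0" unfolding valB_def by auto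
  ultimately show ?thesis using True by simp
next
  case False
  define a where "a = u ! (i - 1)"
  define b where "b = u ! i"
  have a1: "a \<ge> 1" using perms_nth[OF u, of "i - 1"] i unfolding a_def by simp
  have b1: "b \<ge> 1" using perms_nth[OF u, of i] i unfolding b_def by simp
  have vA: "valA u i = a" "valA u (i + 1) = b" unfolding valA_def a_def b_def using False by auto
  have wa: "w ! (i - 1) = int a \<or> w ! (i - 1) = - int a" using w i unfolding lset_def a_def by auto
  have wb: "w ! i = int b \<or> w ! i = - int b" using w i unfolding lset_def b_def by auto
  have vB: "valB w i = w ! (i - 1)" "valB w (i + 1) = w ! i" unfolding valB_def using False by auto
  have ab: "a \<noteq> b" using valA_neq[OF u i] vA by simp
  show ?thesis unfolding asc_def vA vB using wa wb a1 b1 ab by auto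
qed

definition CA :: "nat \<Rightarrow> nat set \<Rightarrow> nat set \<Rightarrow> nat list \<Rightarrow> nat \<Rightarrow> int set" where
  "CA n I J u k = {x \<in> pm u k. (asc u k \<and> k \<in> I \<longrightarrow> (k \<in> J \<longleftrightarrow> x < 0))
       \<and> (k + 1 < n \<and> \<not> asc u (k + 1) \<and> k + 1 \<in> I \<longrightarrow> (k + 1 \<in> J \<longleftrightarrow> 0 < x))}"

lemma constr_lset:
  assumes u: "u \<in> perms n" and I: "I \<subseteq> {..<n}" and n1: "n \<ge> 1"
  shows "{w \<in> lset n (pm u). \<forall>i\<in>I. (i \<in> J \<longleftrightarrow> valB w i > valB w (i + 1))} = lset n (CA n I J u)"
proof (rule set_eqI, rule iffI)
  fix w assume a: "w \<in> {w \<in> lset n (pm u). \<forall>i\<in>I. (i \<in> J \<longleftrightarrow> valB w i > valB w (i + 1))}"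
  then have w: "w \<in> lset n (pm u)" and c: "\<forall>i\<in>I. (i \<in> J \<longleftrightarrow> valB w i > valB w (i + 1))" by auto
  have "w ! k \<in> CA n I J u k" if k: "k < n" for k
  proof -
    have "w ! k \<in> pm u k" using w k unfolding lset_def by simp
    moreover have "k \<in> J \<longleftrightarrow> w ! k < 0" if "asc u k" "k \<in> I"
      using c that sign_lemma[OF u w k] by simp
    moreover have "k + 1 \<in> J \<longleftrightarrow> 0 < w ! k" if "k + 1 < n" "\<not> asc u (k + 1)" "k + 1 \<in> I"
      using c that sign_lemma[OF u w that(1)] by simp
    ultimately show ?thesis unfolding CA_def by blast
  qed
  then show "w \<in> lset n (CA n I J u)" using w unfolding lset_def by simp
next
  fix w assume w': "w \<in> lset n (CA n I J u)"
  have w: "w \<in> lset n (pm u)" using w' unfolding lset_def CA_def by auto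
  have "i \<in> J \<longleftrightarrow> valB w i > valB w (i + 1)" if i: "i \<in> I" for i
  proof -
    have il: "i < n" using i I by auto
    show ?thesis
    proof (cases "asc u i")
      case True
      have "w ! i \<in> CA n I J u i" using w' il unfolding lset_def by simp
      then have "i \<in> J \<longleftrightarrow> w ! i < 0" using True i unfolding CA_def by blast
      then show ?thesis using sign_lemma[OF u w il] True by simp
    next
      case False
      have i0: "i \<noteq> 0"
      proof
        assume "i = 0" then show False using False asc0[OF u n1] by simp
      qed
      then have k: "i - 1 < n" "i - 1 + 1 = i" using il by auto
      have "w ! (i - 1) \<in> CA n I J u (i - 1)" using w' k unfolding lset_def by simp
      then have "i \<in> J \<longleftrightarrow> 0 < w ! (i - 1)" using False i k il unfolding CA_def by auto
      then show ?thesis using sign_lemma[OF u w il] False by simp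
    qed
  qed
  then show "w \<in> {w \<in> lset n (pm u). \<forall>i\<in>I. (i \<in> J \<longleftrightarrow> valB w i > valB w (i + 1))}"
    using w by simp
qed

lemma card_pm_filter:
  assumes "a \<ge> (1::int)"
  shows "card {x \<in> {a, -a}. Q x} = (if Q a then 1 else 0) + (if Q (-a) then 1 else 0)"
proof -
  have "{x \<in> {a, -a}. Q x} = (if Q a then {a} else {}) \<union> (if Q (-a) then {-a} else {})" by auto
  then show ?thesis using assms by (auto simp: card_insert_if)
qed

lemma card_CA:
  assumes u: "u \<in> perms n" and k: "k < n"
  shows "card (CA n I J u k) =
    (let P1 = (asc u k \<and> k \<in> I); P2 = (k + 1 < n \<and> \<not> asc u (k + 1) \<and> k + 1 \<in> I) in
     if P1 \<and> P2 then (if (k \<in> J) \<noteq> (k + 1 \<in> J) then 1 else 0)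
     else if \<not> P1 \<and> \<not> P2 then 2 else 1)"
proof -
  have a: "int (u ! k) \<ge> 1" using perms_nth[OF u k] by simp
  show ?thesis unfolding CA_def Let_def
    by (subst card_pm_filter[OF a]) (use a in auto)
qed

lemma fin_pm: "finite (pm u k)" by simp

lemma fin_CA: "finite (CA n I J u k)" unfolding CA_def by simp



section \<open>The type B count\<close>

definition hB :: "nat set \<Rightarrow> nat set \<Rightarrow> nat" where
  "hB J P = (if \<forall>p\<in>P. (p - 1 \<in> J) \<noteq> (p \<in> J) then 2 ^ card P else 0)"

lemma DesB_iff:
  assumes "n \<ge> 1" "J \<subseteq> {..<n}"
  shows "DesB n w = J \<longleftrightarrow> (\<forall>i\<in>{..<n}. (i \<in> J \<longleftrightarrow> valB w i > valB w (i + 1)))"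
proof -
  have "{0..n-1} = {..<n}" using assms(1) by auto
  then have "DesB n w = {i\<in>{..<n}. valB w i > valB w (i+1)}" unfolding DesB_def by simp
  then show ?thesis using assms(2) by auto
qed

lemma Peak_Pk:
  assumes u: "u \<in> perms n"
  shows "Peak n u = Suc ` {k. Suc k < n \<and> asc u k \<and> \<not> asc u (Suc k)}"
proof (rule set_eqI, rule iffI)
  fix i assume "i \<in> Peak n u"
  then have i: "1 \<le> i" "i \<le> n - 1" "valA u (i-1) < valA u i" "valA u i > valA u (i+1)"
    unfolding Peak_def by auto
  then have "i = Suc (i - 1)" "Suc (i - 1) < n" "asc u (i - 1)" "\<not> asc u (Suc (i - 1))"
    unfolding asc_def by auto
  then show "i \<in> Suc ` {k. Suc k < n \<and> asc u k \<and> \<not> asc u (Suc k)}" by blast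
next
  fix i assume "i \<in> Suc ` {k. Suc k < n \<and> asc u k \<and> \<not> asc u (Suc k)}"
  then obtain k where k: "i = Suc k" "Suc k < n" "asc u k" "\<not> asc u (Suc k)" by blast
  have "valA u (Suc k) \<noteq> valA u (Suc k + 1)" using valA_neq[OF u k(2)] .
  then have "valA u (Suc k) > valA u (Suc k + 1)" using k(4) unfolding asc_def by auto
  then show "i \<in> Peak n u" using k unfolding Peak_def asc_def by auto
qed

theorem countB:
  assumes u: "u \<in> perms n" and n1: "n \<ge> 1" and J: "J \<subseteq> {..<n}"
  shows "card {w \<in> sperms n. forget w = u \<and> DesB n w = J} = hB J (Peak n u)"
proof -
  have "{w \<in> sperms n. forget w = u \<and> DesB n w = J}
      = {w \<in> lset n (pm u). \<forall>i\<in>{..<n}. (i \<in> J \<longleftrightarrow> valB w i > valB w (i + 1))}"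
    using sv_eq[OF u] DesB_iff[OF n1 J] by blast
  also have "\<dots> = lset n (CA n {..<n} J u)" by (rule constr_lset[OF u _ n1]) simp
  finally have e1: "card {w \<in> sperms n. forget w = u \<and> DesB n w = J} = (\<Prod>k<n. card (CA n {..<n} J u k))"
    using lset_card[OF fin_CA] by simp
  define bb where "bb k = (k < n \<and> \<not> asc u k)" for k
  define e where "e k = (if (k \<in> J) \<noteq> (Suc k \<in> J) then 1 else (0::nat))" for k
  define Pk where "Pk = {k. k < n \<and> \<not> bb k \<and> bb (Suc k)}"
  define Vk where "Vk = {k. k < n \<and> bb k \<and> \<not> bb (Suc k)}"
  have cA: "card (CA n {..<n} J u k) = (if k \<in> Pk then e k else 1) * (if k \<in> Vk then 2 else 1)"
    if k: "k < n" for k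
    using card_CA[OF u k, of "{..<n}" J] k unfolding Let_def Pk_def Vk_def bb_def e_def by auto
  have "(\<Prod>k<n. card (CA n {..<n} J u k)) = (\<Prod>k<n. (if k \<in> Pk then e k else 1) * (if k \<in> Vk then 2 else 1))"
    using cA by (rule prod.cong[OF refl]) simp
  also have "\<dots> = (\<Prod>k<n. if k \<in> Pk then e k else 1) * (\<Prod>k<n. if k \<in> Vk then 2 else 1)"
    by (rule prod.distrib)
  also have "(\<Prod>k<n. if k \<in> Pk then e k else 1) = prod e ({..<n} \<inter> Pk)"
    by (rule prod.inter_restrict[symmetric]) simp
  also have "{..<n} \<inter> Pk = Pk" unfolding Pk_def by auto
  also have "(\<Prod>k<n. if k \<in> Vk then 2 else (1::nat)) = prod (\<lambda>k. 2) ({..<n} \<inter> Vk)"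
    by (rule prod.inter_restrict[symmetric]) simp
  also have "{..<n} \<inter> Vk = Vk" unfolding Vk_def by auto
  finally have e2: "(\<Prod>k<n. card (CA n {..<n} J u k)) = prod e Pk * 2 ^ card Vk" by simp
  have "int (card Pk) - int (card Vk) = (if bb n then 1 else 0) - (if bb 0 then 1 else 0)"
    unfolding Pk_def Vk_def by (rule transitions)
  moreover have "\<not> bb n" unfolding bb_def by simp
  moreover have "\<not> bb 0" unfolding bb_def using asc0[OF u n1] by simp
  ultimately have cV: "card Vk = card Pk" by simp
  have PkE: "Pk = {k. Suc k < n \<and> asc u k \<and> \<not> asc u (Suc k)}" unfolding Pk_def bb_def by auto
  have pk: "Peak n u = Suc ` Pk" using Peak_Pk[OF u] PkE by simp
  have cP: "card (Peak n u) = card Pk" unfolding pk by (rule card_image) simp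
  have finPk: "finite Pk" unfolding Pk_def by simp
  have pe: "prod e Pk = (if \<forall>k\<in>Pk. (k \<in> J) \<noteq> (Suc k \<in> J) then 1 else 0)"
  proof (cases "\<forall>k\<in>Pk. (k \<in> J) \<noteq> (Suc k \<in> J)")
    case True
    then have "prod e Pk = prod (\<lambda>k. 1) Pk" unfolding e_def by (intro prod.cong) auto
    then show ?thesis using True by simp
  next
    case False
    then obtain k where "k \<in> Pk" "e k = 0" unfolding e_def by auto
    then have "prod e Pk = 0" using finPk by (meson prod_zero_iff)
    then show ?thesis using False by simp
  qed
  have cond: "(\<forall>k\<in>Pk. (k \<in> J) \<noteq> (Suc k \<in> J)) \<longleftrightarrow> (\<forall>p\<in>Peak n u. (p - 1 \<in> J) \<noteq> (p \<in> J))"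
    unfolding pk by auto
  show ?thesis unfolding e1 e2 hB_def pe cV cP cond[symmetric] by simp
qed



section \<open>The type D count\<close>

definition hD :: "nat set \<Rightarrow> nat set \<Rightarrow> rat" where
  "hD J P = (if 1 \<in> P then of_nat (hB J P) / 2 else if (0 \<in> J \<longleftrightarrow> 1 \<in> J) then of_nat (hB J P) else 0)"

abbreviation negs :: "int list \<Rightarrow> nat" where
  "negs w \<equiv> length (filter (\<lambda>x. x < 0) w)"

lemma setB:
  assumes u: "u \<in> perms n" and n1: "n \<ge> 1" and J: "J \<subseteq> {..<n}"
  shows "{w \<in> sperms n. forget w = u \<and> DesB n w = J} = lset n (CA n {..<n} J u)"
proof -
  have "{w \<in> sperms n. forget w = u \<and> DesB n w = J}
      = {w \<in> lset n (pm u). \<forall>i\<in>{..<n}. (i \<in> J \<longleftrightarrow> valB w i > valB w (i + 1))}"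
    using sv_eq[OF u] DesB_iff[OF n1 J] by blast
  also have "\<dots> = lset n (CA n {..<n} J u)" by (rule constr_lset[OF u _ n1]) simp
  finally show ?thesis .
qed

lemma card_lset_CA:
  assumes u: "u \<in> perms n" and n1: "n \<ge> 1" and J: "J \<subseteq> {..<n}"
  shows "card (lset n (CA n {..<n} J u)) = hB J (Peak n u)"
  using countB[OF u n1 J] setB[OF u n1 J] by simp

lemma sum_sg_pm:
  assumes u: "u \<in> perms n" and k: "k < n"
  shows "(\<Sum>x\<in>pm u k. sg x) = 0"
proof -
  have a: "int (u ! k) \<ge> 1" using perms_nth[OF u k] by simp
  then have "int (u ! k) \<noteq> - int (u ! k)" by simp
  then show ?thesis using a by (simp add: sg_def)
qed

lemma CA_free:
  assumes "\<not> (asc u k \<and> k \<in> I)" "\<not> (k + 1 < n \<and> \<not> asc u (k + 1) \<and> k + 1 \<in> I)"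
  shows "CA n I J u k = pm u k"
  using assms unfolding CA_def by auto

lemma dset:
  assumes u: "u \<in> perms n"
  shows "{w \<in> dperms n. forget w = u \<and> Q w} = {w \<in> lset n (pm u). even (negs w) \<and> Q w}"
  using sv_eq[OF u] unfolding dperms_def by blast

lemma DesD_rel:
  assumes u: "u \<in> perms n" and n2: "n \<ge> 2" and w: "w \<in> lset n (pm u)"
  shows "(- valB w 1 > valB w 2) \<longleftrightarrow> (if asc u 1 then valB w 1 > valB w (1 + 1) else valB w 0 > valB w (0 + 1))"
proof -
  define a where "a = u ! 0"
  define b where "b = u ! 1"
  have a1: "a \<ge> 1" using perms_nth[OF u, of 0] n2 unfolding a_def by simp
  have b1: "b \<ge> 1" using perms_nth[OF u, of 1] n2 unfolding b_def by simp
  have ab: "a \<noteq> b" using perms_inj[OF u, of 0 1] n2 unfolding a_def b_def by auto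
  have vA: "asc u 1 \<longleftrightarrow> a < b" unfolding asc_def valA_def a_def b_def by simp
  have wa: "w ! 0 = int a \<or> w ! 0 = - int a" using w n2 unfolding lset_def a_def by auto
  have wb: "w ! 1 = int b \<or> w ! 1 = - int b" using w n2 unfolding lset_def b_def by auto
  have vB: "valB w 1 = w ! 0" "valB w 2 = w ! 1" "valB w 0 = 0" "valB w (1 + 1) = w ! 1" "valB w (0 + 1) = w ! 0"
    unfolding valB_def by auto
  show ?thesis unfolding vA vB using wa wb a1 b1 ab by auto
qed

lemma DesD_expand:
  assumes n2: "n \<ge> 2"
  shows "DesD n w = {i \<in> {1..<n}. valB w i > valB w (i + 1)} \<union> (if - valB w 1 > valB w 2 then {0} else {})"
proof -
  have "{1..n-1} = {1..<n}" using n2 by auto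
  then show ?thesis unfolding DesD_def using n2 by simp
qed

lemma DesD_iff_nasc:
  assumes u: "u \<in> perms n" and n2: "n \<ge> 2" and w: "w \<in> lset n (pm u)" and na: "\<not> asc u 1"
  shows "DesD n w = DesB n w"
proof -
  have r: "(- valB w 1 > valB w 2) \<longleftrightarrow> valB w 0 > valB w 1" using DesD_rel[OF u n2 w] na by simp
  have "{0..n-1} = insert 0 {1..<n}" using n2 by auto
  then have "DesB n w = {i \<in> {1..<n}. valB w i > valB w (i + 1)} \<union> (if valB w 0 > valB w 1 then {0} else {})"
    unfolding DesB_def by auto
  then show ?thesis using DesD_expand[OF n2] r by simp
qed

lemma DesD_iff_asc:
  assumes u: "u \<in> perms n" and n2: "n \<ge> 2" and w: "w \<in> lset n (pm u)" and a: "asc u 1"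
    and J: "J \<subseteq> {..<n}"
  shows "DesD n w = J \<longleftrightarrow> (0 \<in> J \<longleftrightarrow> 1 \<in> J) \<and> (\<forall>i\<in>{1..<n}. (i \<in> J \<longleftrightarrow> valB w i > valB w (i + 1)))"
proof -
  have r: "(- valB w 1 > valB w 2) \<longleftrightarrow> valB w 1 > valB w (1 + 1)" using DesD_rel[OF u n2 w] a by simp
  have e: "DesD n w = {i \<in> {1..<n}. valB w i > valB w (i + 1)} \<union> (if valB w 1 > valB w (1 + 1) then {0} else {})"
    using DesD_expand[OF n2] r by simp
  have one: "1 \<in> {1..<n}" using n2 by simp
  show ?thesis
  proof
    assume "DesD n w = J"
    then have J': "J = {i \<in> {1..<n}. valB w i > valB w (i + 1)} \<union> (if valB w 1 > valB w (1 + 1) then {0} else {})"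
      using e by simp
    have a1: "0 \<in> J \<longleftrightarrow> valB w 1 > valB w (1 + 1)" unfolding J' by auto
    have a2: "1 \<in> J \<longleftrightarrow> valB w 1 > valB w (1 + 1)" unfolding J' using one by auto
    have a3: "\<forall>i\<in>{1..<n}. (i \<in> J \<longleftrightarrow> valB w i > valB w (i + 1))" unfolding J' by auto
    show "(0 \<in> J \<longleftrightarrow> 1 \<in> J) \<and> (\<forall>i\<in>{1..<n}. (i \<in> J \<longleftrightarrow> valB w i > valB w (i + 1)))"
      using a1 a2 a3 by blast
  next
    assume h: "(0 \<in> J \<longleftrightarrow> 1 \<in> J) \<and> (\<forall>i\<in>{1..<n}. (i \<in> J \<longleftrightarrow> valB w i > valB w (i + 1)))"
    show "DesD n w = J"
    proof (rule set_eqI)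
      fix i show "i \<in> DesD n w \<longleftrightarrow> i \<in> J"
      proof (cases "i = 0")
        case True
        then show ?thesis using e h one by auto
      next
        case False
        then show ?thesis using e h J by auto
      qed
    qed
  qed
qed

lemma Peak_one:
  assumes u: "u \<in> perms n" and n2: "n \<ge> 2"
  shows "1 \<in> Peak n u \<longleftrightarrow> \<not> asc u 1"
proof -
  have "1 \<in> Peak n u \<longleftrightarrow> 0 \<in> {k. Suc k < n \<and> asc u k \<and> \<not> asc u (Suc k)}"
    unfolding Peak_Pk[OF u] by auto
  then show ?thesis using asc0[OF u] n2 by auto
qed

lemma valley_exists:
  assumes u: "u \<in> perms n" and na: "\<not> asc u 1" and n2: "n \<ge> 2"
  shows "\<exists>k<n. \<not> asc u k \<and> \<not> (k + 1 < n \<and> \<not> asc u (k + 1))"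
proof -
  define M where "M = {m. 1 \<le> m \<and> m < n \<and> (\<forall>j. 1 \<le> j \<and> j \<le> m \<longrightarrow> \<not> asc u j)}"
  have "1 \<in> M" unfolding M_def using na n2 by (auto simp: le_Suc_eq)
  moreover have "finite M" unfolding M_def by simp
  ultimately have k0: "Max M \<in> M" using Max_in by blast
  define k where "k = Max M"
  have k: "k \<in> M" using k0 unfolding k_def .
  then have kp: "1 \<le> k" "k < n" "\<forall>j. 1 \<le> j \<and> j \<le> k \<longrightarrow> \<not> asc u j" unfolding M_def by blast+
  have "\<not> asc u k" using kp by blast
  moreover have "\<not> (k + 1 < n \<and> \<not> asc u (k + 1))"
  proof
    assume h: "k + 1 < n \<and> \<not> asc u (k + 1)"
    have "\<forall>j. 1 \<le> j \<and> j \<le> k + 1 \<longrightarrow> \<not> asc u j"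
      using kp h by (metis le_Suc_eq Suc_eq_plus1)
    then have "k + 1 \<in> M" using kp h unfolding M_def by simp
    then have "k + 1 \<le> Max M" using \<open>finite M\<close> by simp
    then show False unfolding k_def by simp
  qed
  moreover have "k < n" using kp by simp
  ultimately show ?thesis by blast
qed

theorem countD2:
  assumes u: "u \<in> perms n" and n2: "n \<ge> 2" and J: "J \<subseteq> {..<n}"
  shows "of_nat (card {w \<in> dperms n. forget w = u \<and> DesD n w = J}) = hD J (Peak n u)"
proof (cases "asc u 1")
  case False
  have n1: "n \<ge> 1" using n2 by simp
  have "{w \<in> dperms n. forget w = u \<and> DesD n w = J} = {w \<in> lset n (pm u). even (negs w) \<and> DesD n w = J}"
    by (rule dset[OF u])
  also have "\<dots> = {w \<in> lset n (pm u). even (negs w) \<and> DesB n w = J}"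
    using DesD_iff_nasc[OF u n2 _ False] by blast
  also have "\<dots> = {w \<in> lset n (CA n {..<n} J u). even (negs w)}"
    using setB[OF u n1 J] sv_eq[OF u] by blast
  finally have e: "{w \<in> dperms n. forget w = u \<and> DesD n w = J} = {w \<in> lset n (CA n {..<n} J u). even (negs w)}" .
  obtain k where k: "k < n" "\<not> asc u k" "\<not> (k + 1 < n \<and> \<not> asc u (k + 1))"
    using valley_exists[OF u False n2] by blast
  have "CA n {..<n} J u k = pm u k" by (rule CA_free) (use k in auto)
  then have z: "\<exists>k<n. (\<Sum>x\<in>CA n {..<n} J u k. sg x) = 0" using sum_sg_pm[OF u k(1)] k(1) by auto
  have "2 * card {w \<in> lset n (CA n {..<n} J u). even (negs w)} = card (lset n (CA n {..<n} J u))"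
    by (rule even_count[OF fin_CA z])
  then have "2 * card {w \<in> dperms n. forget w = u \<and> DesD n w = J} = hB J (Peak n u)"
    using e card_lset_CA[OF u n1 J] by simp
  moreover have "1 \<in> Peak n u" using Peak_one[OF u n2] False by simp
  ultimately show ?thesis unfolding hD_def by (simp add: field_simps)
next
  case True
  have n1: "n \<ge> 1" using n2 by simp
  have np: "1 \<notin> Peak n u" using Peak_one[OF u n2] True by simp
  show ?thesis
  proof (cases "0 \<in> J \<longleftrightarrow> 1 \<in> J")
    case False
    have "{w \<in> dperms n. forget w = u \<and> DesD n w = J} = {w \<in> lset n (pm u). even (negs w) \<and> DesD n w = J}"
      by (rule dset[OF u])
    also have "\<dots> = {}" using DesD_iff_asc[OF u n2 _ True J] False by blast
    finally have E: "{w \<in> dperms n. forget w = u \<and> DesD n w = J} = {}" .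
    have "card {w \<in> dperms n. forget w = u \<and> DesD n w = J} = 0" unfolding E by simp
    then show ?thesis using np False unfolding hD_def by simp
  next
    case c01: True
    let ?I = "{1..<n}"
    have "{w \<in> dperms n. forget w = u \<and> DesD n w = J} = {w \<in> lset n (pm u). even (negs w) \<and> DesD n w = J}"
      by (rule dset[OF u])
    also have "\<dots> = {w \<in> lset n (pm u). even (negs w) \<and> (\<forall>i\<in>?I. (i \<in> J \<longleftrightarrow> valB w i > valB w (i + 1)))}"
      using DesD_iff_asc[OF u n2 _ True J] c01 by blast
    also have "\<dots> = {w \<in> {w \<in> lset n (pm u). \<forall>i\<in>?I. (i \<in> J \<longleftrightarrow> valB w i > valB w (i + 1))}. even (negs w)}"
      by blast
    also have "\<dots> = {w \<in> lset n (CA n ?I J u). even (negs w)}"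
    proof -
      have "{w \<in> lset n (pm u). \<forall>i\<in>?I. (i \<in> J \<longleftrightarrow> valB w i > valB w (i + 1))} = lset n (CA n ?I J u)"
        by (rule constr_lset[OF u _ n1]) auto
      then show ?thesis by simp
    qed
    finally have e: "{w \<in> dperms n. forget w = u \<and> DesD n w = J} = {w \<in> lset n (CA n ?I J u). even (negs w)}" .
    have c0: "CA n ?I J u 0 = pm u 0" by (rule CA_free) (use True in auto)
    have z: "\<exists>k<n. (\<Sum>x\<in>CA n ?I J u k. sg x) = 0"
    proof (intro exI conjI)
      show "0 < n" using n2 by simp
      show "(\<Sum>x\<in>CA n ?I J u 0. sg x) = 0" unfolding c0 using sum_sg_pm[OF u, of 0] n2 by simp
    qed
    have ev: "2 * card {w \<in> lset n (CA n ?I J u). even (negs w)} = card (lset n (CA n ?I J u))"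
      by (rule even_count[OF fin_CA z])
    have same: "CA n ?I J u (Suc k) = CA n {..<n} J u (Suc k)" for k
      unfolding CA_def by auto
    obtain m where m: "n = Suc m" using n2 by (cases n) auto
    have "card (lset n (CA n ?I J u)) = (\<Prod>k<n. card (CA n ?I J u k))" by (rule lset_card[OF fin_CA])
    also have "\<dots> = card (CA n ?I J u 0) * (\<Prod>k<m. card (CA n ?I J u (Suc k)))"
      unfolding m by (rule prod.lessThan_Suc_shift)
    also have "\<dots> = 2 * (\<Prod>k<m. card (CA n {..<n} J u (Suc k)))"
    proof -
      have "card (CA n ?I J u 0) = 2" unfolding c0 using sum_sg_pm[OF u, of 0] perms_nth[OF u, of 0] n2
        by (simp add: card_insert_if)
      then show ?thesis using same by simp
    qed
    also have "(\<Prod>k<m. card (CA n {..<n} J u (Suc k))) = card (CA n {..<n} J u 0) * (\<Prod>k<m. card (CA n {..<n} J u (Suc k)))"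
    proof -
      have "card (CA n {..<n} J u 0) = 1"
        using card_CA[OF u, of 0 "{..<n}" J] n2 True asc0[OF u n1] by (simp add: Let_def)
      then show ?thesis by simp
    qed
    also have "card (CA n {..<n} J u 0) * (\<Prod>k<m. card (CA n {..<n} J u (Suc k))) = (\<Prod>k<n. card (CA n {..<n} J u k))"
      unfolding m by (rule prod.lessThan_Suc_shift[symmetric])
    also have "\<dots> = card (lset n (CA n {..<n} J u))" by (rule lset_card[OF fin_CA, symmetric])
    also have "\<dots> = hB J (Peak n u)" by (rule card_lset_CA[OF u n1 J])
    finally have "card (lset n (CA n ?I J u)) = 2 * hB J (Peak n u)" .
    then have "card {w \<in> dperms n. forget w = u \<and> DesD n w = J} = hB J (Peak n u)" using e ev by simp
    then show ?thesis using np c01 unfolding hD_def by simp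
  qed
qed



section \<open>Images of the type B and D descent algebras\<close>

lemma SigmaB_cfun: "SigmaB n = cfun (sperms n) (DesB n)"
proof -
  have "SigmaB n = cls (sperms n) (DesB n) (Pow {0..n-1})"
    unfolding SigmaB_def YB_def cls_def by simp
  also have "\<dots> = cfun (sperms n) (DesB n)"
    by (rule cls_eq_cfun) (auto simp: DesB_def)
  finally show ?thesis .
qed

lemma DesD_sub: "DesD n w \<subseteq> DIdx n"
  unfolding DesD_def DIdx_def by auto

lemma SigmaD_cfun: "SigmaD n = cfun (dperms n) (DesD n)"
proof -
  have "SigmaD n = cls (dperms n) (DesD n) (Pow (DIdx n))"
    unfolding SigmaD_def YD_def cls_def by simp
  also have "\<dots> = cfun (dperms n) (DesD n)"
    by (rule cls_eq_cfun) (insert DesD_sub, auto simp: DIdx_def)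
  finally show ?thesis .
qed

lemma forget_perms: "w \<in> sperms n \<Longrightarrow> forget w \<in> perms n"
  unfolding sperms_def perms_def forget_def by auto

lemma fiber_empty: "u \<notin> perms n \<Longrightarrow> {w \<in> sperms n. forget w = u} = {}"
  using forget_perms by blast

lemma fiber_finite: "finite {w \<in> sperms n. forget w = u}"
proof (cases "u \<in> perms n")
  case True
  then show ?thesis using sv_eq[OF True] lset_finite[of n "pm u"] by simp
next
  case False
  show ?thesis unfolding fiber_empty[OF False] by simp
qed

lemma sum_ind: "finite A \<Longrightarrow> (\<Sum>w\<in>A. if P w then 1 else (0::rat)) = of_nat (card {w \<in> A. P w})"
  by (simp add: sum.If_cases Int_def)

lemma phi_lin:
  "finite A \<Longrightarrow> phi n (\<lambda>w. \<Sum>J\<in>A. c J * g J w) u = (\<Sum>J\<in>A. c J * phi n (g J) u)"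
  unfolding phi_def by (subst sum.swap) (simp add: sum_distrib_left)

lemma psi_lin:
  "finite A \<Longrightarrow> psi n (\<lambda>w. \<Sum>J\<in>A. c J * g J w) u = (\<Sum>J\<in>A. c J * psi n (g J) u)"
  unfolding psi_def by (subst sum.swap) (simp add: sum_distrib_left)

lemma phi_add: "phi n (\<lambda>w. f w + g w) = (\<lambda>u. phi n f u + phi n g u)"
  unfolding phi_def by (simp add: sum.distrib)
lemma phi_smult: "phi n (\<lambda>w. a * f w) = (\<lambda>u. a * phi n f u)"
  unfolding phi_def by (simp add: sum_distrib_left)
lemma psi_add: "psi n (\<lambda>w. f w + g w) = (\<lambda>u. psi n f u + psi n g u)"
  unfolding psi_def by (simp add: sum.distrib)
lemma psi_smult: "psi n (\<lambda>w. a * f w) = (\<lambda>u. a * psi n f u)"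
  unfolding psi_def by (simp add: sum_distrib_left)

lemma phi_YB:
  assumes n1: "n \<ge> 1" and J: "J \<subseteq> {..<n}"
  shows "phi n (YB n J) u = (if u \<in> perms n then of_nat (hB J (Peak n u)) else 0)"
proof (cases "u \<in> perms n")
  case True
  have "phi n (YB n J) u = (\<Sum>w\<in>{w \<in> sperms n. forget w = u}. if DesB n w = J then 1 else 0)"
    unfolding phi_def YB_def by (rule sum.cong) auto
  also have "\<dots> = of_nat (card {w \<in> {w \<in> sperms n. forget w = u}. DesB n w = J})"
    by (rule sum_ind[OF fiber_finite])
  also have "{w \<in> {w \<in> sperms n. forget w = u}. DesB n w = J} = {w \<in> sperms n. forget w = u \<and> DesB n w = J}"
    by blast
  finally show ?thesis using countB[OF True n1 J] True by simp
next
  case False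
  show ?thesis unfolding phi_def fiber_empty[OF False] using False by simp
qed

lemma dfiber: "{w \<in> dperms n. forget w = u} \<subseteq> {w \<in> sperms n. forget w = u}"
  unfolding dperms_def by auto

lemma countD1:
  assumes u: "u \<in> perms 1"
  shows "card {w \<in> dperms 1. forget w = u \<and> DesD 1 w = {}} = 1"
proof -
  have d: "DesD 1 w = {}" for w unfolding DesD_def by simp
  have "{w \<in> dperms 1. forget w = u \<and> DesD 1 w = {}} = {w \<in> lset 1 (pm u). even (negs w) \<and> True}"
    using dset[OF u, of "\<lambda>w. True"] d by simp
  also have "\<dots> = {w \<in> lset 1 (pm u). even (negs w)}" by simp
  finally have e: "{w \<in> dperms 1. forget w = u \<and> DesD 1 w = {}} = {w \<in> lset 1 (pm u). even (negs w)}" .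
  have z: "\<exists>k<1. (\<Sum>x\<in>pm u k. sg x) = 0" using sum_sg_pm[OF u, of 0] by auto
  have "2 * card {w \<in> lset 1 (pm u). even (negs w)} = card (lset 1 (pm u))"
    by (rule even_count[OF _ z]) simp
  also have "\<dots> = card (pm u 0)" by (subst lset_card) auto
  also have "\<dots> = 2" using perms_nth[OF u, of 0] by (simp add: card_insert_if)
  finally show ?thesis using e by simp
qed

lemma psi_YD:
  assumes n1: "n \<ge> 1" and J: "J \<subseteq> DIdx n"
  shows "psi n (YD n J) u = (if u \<in> perms n then hD J (Peak n u) else 0)"
proof (cases "u \<in> perms n")
  case True
  have fin: "finite {w \<in> dperms n. forget w = u}" using fiber_finite dfiber by (rule finite_subset[rotated])
  have "psi n (YD n J) u = (\<Sum>w\<in>{w \<in> dperms n. forget w = u}. if DesD n w = J then 1 else 0)"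
    unfolding psi_def YD_def by (rule sum.cong) auto
  also have "\<dots> = of_nat (card {w \<in> {w \<in> dperms n. forget w = u}. DesD n w = J})"
    by (rule sum_ind[OF fin])
  also have "{w \<in> {w \<in> dperms n. forget w = u}. DesD n w = J} = {w \<in> dperms n. forget w = u \<and> DesD n w = J}"
    by blast
  finally have e: "psi n (YD n J) u = of_nat (card {w \<in> dperms n. forget w = u \<and> DesD n w = J})" .
  show ?thesis
  proof (cases "n \<ge> 2")
    case True
    have "J \<subseteq> {..<n}" using J True unfolding DIdx_def by auto
    then show ?thesis using e countD2[OF \<open>u \<in> perms n\<close> True] \<open>u \<in> perms n\<close> by simp
  next
    case False
    then have n: "n = 1" using n1 by simp
    have J0: "J = {}" using J n unfolding DIdx_def by simp
    have P0: "Peak n u = {}" unfolding Peak_def n by auto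
    have "hD J (Peak n u) = 1" unfolding P0 J0 hD_def hB_def by simp
    then show ?thesis using e countD1 \<open>u \<in> perms n\<close> n J0 by simp
  qed
next
  case False
  have E: "{w \<in> dperms n. forget w = u} = {}" using fiber_empty[OF False] dfiber by blast
  show ?thesis unfolding psi_def E using False by simp
qed

definition JF :: "nat \<Rightarrow> nat set \<Rightarrow> nat set" where
  "JF n F = {i \<in> {1..<n}. odd (card {f \<in> F. f \<le> i})}"

lemma JF_toggle:
  assumes F: "F \<subseteq> {1..n-1}" and p: "p \<in> {1..n-1}"
  shows "(p - 1 \<in> JF n F) \<noteq> (p \<in> JF n F) \<longleftrightarrow> p \<in> F"
proof -
  have finF: "finite F" using F finite_subset by blast
  have a: "p - 1 \<in> JF n F \<longleftrightarrow> odd (card {f \<in> F. f \<le> p - 1})"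
  proof (cases "p = 1")
    case True
    have "0 \<notin> F" using F by auto
    then have E: "{f \<in> F. f \<le> p - 1} = {}" using True by auto
    have "p - 1 \<notin> JF n F" using True unfolding JF_def by simp
    then show ?thesis unfolding E by simp
  next
    case False
    then show ?thesis using p unfolding JF_def by auto
  qed
  have b: "p \<in> JF n F \<longleftrightarrow> odd (card {f \<in> F. f \<le> p})" using p unfolding JF_def by auto
  have s: "{f \<in> F. f \<le> p} = {f \<in> F. f \<le> p - 1} \<union> (if p \<in> F then {p} else {})"
  proof (rule set_eqI)
    fix x
    have "x \<le> p \<longleftrightarrow> x \<le> p - 1 \<or> x = p" using p by auto
    then show "x \<in> {f \<in> F. f \<le> p} \<longleftrightarrow> x \<in> {f \<in> F. f \<le> p - 1} \<union> (if p \<in> F then {p} else {})"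
      by auto
  qed
  have "card {f \<in> F. f \<le> p} = card {f \<in> F. f \<le> p - 1} + (if p \<in> F then 1 else 0)"
    unfolding s using finF p by (auto simp: card_insert_if)
  then show ?thesis unfolding a b by auto
qed

lemma JF_sub: "JF n F \<subseteq> {..<n}" unfolding JF_def by auto

lemma hB_JF:
  assumes F: "F \<in> Fn n" and P: "P \<subseteq> {1..n-1}"
  shows "hB (JF n F) P = (if P \<subseteq> F then 2 ^ card P else 0)"
proof -
  have F': "F \<subseteq> {1..n-1}" using F unfolding Fn_def by auto
  have "(\<forall>p\<in>P. (p - 1 \<in> JF n F) \<noteq> (p \<in> JF n F)) \<longleftrightarrow> P \<subseteq> F"
    using JF_toggle[OF F'] P by blast
  then show ?thesis unfolding hB_def by simp
qed

lemma Peak_sub: "Peak n u \<subseteq> {1..n-1}" unfolding Peak_def by auto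

lemma sum_PF:
  assumes "finite F" "u \<in> perms n"
  shows "(\<Sum>G\<in>Pow F. a G * PF n G u) = (if Peak n u \<subseteq> F then a (Peak n u) else 0)"
proof -
  have "(\<Sum>G\<in>Pow F. a G * PF n G u) = (\<Sum>G\<in>Pow F. if G = Peak n u then a G else 0)"
    unfolding PF_def using assms by (intro sum.cong) auto
  also have "\<dots> = (if Peak n u \<subseteq> F then a (Peak n u) else 0)"
    using assms by (simp add: sum.delta')
  finally show ?thesis .
qed

lemma PF_zero: "u \<notin> perms n \<Longrightarrow> PF n G u = 0" unfolding PF_def by simp

lemma YB_in: "YB n J \<in> SigmaB n"
  unfolding SigmaB_cfun cfun_def YB_def by auto

lemma YD_in: "YD n J \<in> SigmaD n"
  unfolding SigmaD_cfun cfun_def YD_def by auto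

theorem part_B:
  assumes n1: "n \<ge> 1"
  shows "PeakAlg n = phi n ` SigmaB n"
proof
  show "phi n ` SigmaB n \<subseteq> PeakAlg n"
  proof
    fix g assume "g \<in> phi n ` SigmaB n"
    then obtain f where f: "f \<in> SigmaB n" "g = phi n f" by blast
    obtain c where c: "f = (\<lambda>w. \<Sum>J\<in>Pow {0..n-1}. c J * YB n J w)" using f(1) unfolding SigmaB_def by blast
    have sub: "J \<subseteq> {..<n}" if "J \<in> Pow {0..n-1}" for J using that n1 by auto
    have gv: "g u = (if u \<in> perms n then (\<Sum>J\<in>Pow {0..n-1}. c J * of_nat (hB J (Peak n u))) else 0)" for u
    proof -
      have "g u = (\<Sum>J\<in>Pow {0..n-1}. c J * phi n (YB n J) u)" unfolding f(2) c by (rule phi_lin) simp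
      also have "\<dots> = (\<Sum>J\<in>Pow {0..n-1}. c J * (if u \<in> perms n then of_nat (hB J (Peak n u)) else 0))"
        by (rule sum.cong[OF refl]) (simp add: phi_YB[OF n1 sub])
      finally show ?thesis by (cases "u \<in> perms n") auto
    qed
    have "g u = g v" if "u \<in> perms n" "v \<in> perms n" "Peak n u = Peak n v" for u v
      using gv[of u] gv[of v] that by simp
    moreover have "g u = 0" if "u \<notin> perms n" for u using gv[of u] that by simp
    ultimately show "g \<in> PeakAlg n" unfolding PeakAlg_cfun cfun_def by blast
  qed
next
  have V: "subsp (phi n ` SigmaB n)"
    unfolding SigmaB_cfun by (rule subsp_image[OF subsp_cfun phi_add phi_smult])
  have allPF: "PF n F \<in> phi n ` SigmaB n" if F: "F \<in> Fn n" for F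
  proof (rule triangular[OF V Fn_down _ _ F])
    show "finite F" if "F \<in> Fn n" for F using that finite_subset unfolding Fn_def by blast
    fix F assume F: "F \<in> Fn n"
    have finF: "finite F" using F finite_subset unfolding Fn_def by blast
    have inS: "YB n (JF n F) \<in> SigmaB n" by (rule YB_in)
    have eq: "phi n (YB n (JF n F)) = (\<lambda>u. \<Sum>G\<in>Pow F. 2 ^ card G * PF n G u)"
    proof
      fix u show "phi n (YB n (JF n F)) u = (\<Sum>G\<in>Pow F. 2 ^ card G * PF n G u)"
      proof (cases "u \<in> perms n")
        case True
        show ?thesis unfolding phi_YB[OF n1 JF_sub] sum_PF[OF finF True]
          using True hB_JF[OF F Peak_sub] by simp
      next
        case False
        then show ?thesis unfolding phi_YB[OF n1 JF_sub] by (simp add: PF_zero)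
      qed
    qed
    show "\<exists>a. a F \<noteq> 0 \<and> (\<lambda>u. \<Sum>G\<in>Pow F. a G * PF n G u) \<in> phi n ` SigmaB n"
      using eq inS by (intro exI[of _ "\<lambda>G. 2 ^ card G"]) force
  qed
  show "PeakAlg n \<subseteq> phi n ` SigmaB n"
  proof
    fix f assume "f \<in> PeakAlg n"
    then obtain c where c: "f = (\<lambda>u. \<Sum>F\<in>Fn n. c F * PF n F u)" unfolding PeakAlg_def by blast
    show "f \<in> phi n ` SigmaB n" unfolding c by (rule subsp_sum[OF V finite_Fn allPF])
  qed
qed



lemma JF_DIdx: "JF n F \<subseteq> DIdx n" unfolding JF_def DIdx_def by auto

lemma JF_01:
  assumes F: "F \<in> Fn n"
  shows "0 \<notin> JF n F" "1 \<in> JF n F \<longleftrightarrow> 1 \<in> F"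
proof -
  show "0 \<notin> JF n F" unfolding JF_def by simp
  have F': "F \<subseteq> {1..n-1}" using F unfolding Fn_def by auto
  have E: "{f \<in> F. f \<le> 1} = (if 1 \<in> F then {1} else {})" using F' by auto
  show "1 \<in> JF n F \<longleftrightarrow> 1 \<in> F"
  proof
    assume "1 \<in> JF n F"
    then have "odd (card {f \<in> F. f \<le> 1})" unfolding JF_def by simp
    then show "1 \<in> F" unfolding E by (cases "1 \<in> F") auto
  next
    assume a: "1 \<in> F"
    then have "1 < n" using F' by auto
    moreover have "odd (card {f \<in> F. f \<le> 1})" unfolding E using a by simp
    ultimately show "1 \<in> JF n F" unfolding JF_def by simp
  qed
qed

theorem part_D:
  assumes n1: "n \<ge> 1"
  shows "PeakAlg n = psi n ` SigmaD n"
proof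
  show "psi n ` SigmaD n \<subseteq> PeakAlg n"
  proof
    fix g assume "g \<in> psi n ` SigmaD n"
    then obtain f where f: "f \<in> SigmaD n" "g = psi n f" by blast
    obtain c where c: "f = (\<lambda>w. \<Sum>J\<in>Pow (DIdx n). c J * YD n J w)" using f(1) unfolding SigmaD_def by blast
    have fin: "finite (Pow (DIdx n))" unfolding DIdx_def by simp
    have gv: "g u = (if u \<in> perms n then (\<Sum>J\<in>Pow (DIdx n). c J * hD J (Peak n u)) else 0)" for u
    proof -
      have "g u = (\<Sum>J\<in>Pow (DIdx n). c J * psi n (YD n J) u)" unfolding f(2) c by (rule psi_lin[OF fin])
      also have "\<dots> = (\<Sum>J\<in>Pow (DIdx n). c J * (if u \<in> perms n then hD J (Peak n u) else 0))"
        by (rule sum.cong[OF refl]) (simp add: psi_YD[OF n1])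
      finally show ?thesis by (cases "u \<in> perms n") auto
    qed
    have "g u = g v" if "u \<in> perms n" "v \<in> perms n" "Peak n u = Peak n v" for u v
      using gv[of u] gv[of v] that by simp
    moreover have "g u = 0" if "u \<notin> perms n" for u using gv[of u] that by simp
    ultimately show "g \<in> PeakAlg n" unfolding PeakAlg_cfun cfun_def by blast
  qed
next
  have V: "subsp (psi n ` SigmaD n)"
    unfolding SigmaD_cfun by (rule subsp_image[OF subsp_cfun psi_add psi_smult])
  have allPF: "PF n F \<in> psi n ` SigmaD n" if F: "F \<in> Fn n" for F
  proof (rule triangular[OF V Fn_down _ _ F])
    show "finite F" if "F \<in> Fn n" for F using that finite_subset unfolding Fn_def by blast
    fix F assume F: "F \<in> Fn n"
    have finF: "finite F" using F finite_subset unfolding Fn_def by blast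
    define a where "a (G::nat set) = (if 1 \<in> F then (if 1 \<in> G then 2 ^ card G / 2 else 0) else (2::rat) ^ card G)" for G
    have eq: "psi n (YD n (JF n F)) = (\<lambda>u. \<Sum>G\<in>Pow F. a G * PF n G u)"
    proof
      fix u show "psi n (YD n (JF n F)) u = (\<Sum>G\<in>Pow F. a G * PF n G u)"
      proof (cases "u \<in> perms n")
        case True
        let ?P = "Peak n u"
        have hb: "hB (JF n F) ?P = (if ?P \<subseteq> F then 2 ^ card ?P else 0)" by (rule hB_JF[OF F Peak_sub])
        have "hD (JF n F) ?P = (if ?P \<subseteq> F then a ?P else 0)"
          unfolding hD_def hb a_def using JF_01[OF F] by auto
        then show ?thesis unfolding psi_YD[OF n1 JF_DIdx] sum_PF[OF finF True] using True by simp
      next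
        case False
        then show ?thesis unfolding psi_YD[OF n1 JF_DIdx] by (simp add: PF_zero)
      qed
    qed
    have "a F \<noteq> 0" unfolding a_def by simp
    then show "\<exists>a. a F \<noteq> 0 \<and> (\<lambda>u. \<Sum>G\<in>Pow F. a G * PF n G u) \<in> psi n ` SigmaD n"
      using eq YD_in[of n "JF n F"] by (intro exI[of _ a]) force
  qed
  show "PeakAlg n \<subseteq> psi n ` SigmaD n"
  proof
    fix f assume "f \<in> PeakAlg n"
    then obtain c where c: "f = (\<lambda>u. \<Sum>F\<in>Fn n. c F * PF n F u)" unfolding PeakAlg_def by blast
    show "f \<in> psi n ` SigmaD n" unfolding c by (rule subsp_sum[OF V finite_Fn allPF])
  qed
qed



section \<open>Signed permutations as maps on Om\<close>

definition Om :: "nat \<Rightarrow> int set" where "Om n = {- int n..int n}"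

definition ev :: "int list \<Rightarrow> int \<Rightarrow> int" where
  "ev w x = (if x = 0 \<or> nat \<bar>x\<bar> > length w then x else sgn x * w ! (nat \<bar>x\<bar> - 1))"

definition bcomp :: "int list \<Rightarrow> int list \<Rightarrow> int list" where
  "bcomp w v = map (ev w) v"

lemma sperms_len: "w \<in> sperms n \<Longrightarrow> length w = n"
  unfolding sperms_def by simp

lemma sperms_forget: "w \<in> sperms n \<Longrightarrow> forget w \<in> perms n"
  by (rule forget_perms)

lemma sperms_nth:
  assumes w: "w \<in> sperms n" and k: "k < n"
  shows "w ! k \<noteq> 0" "\<bar>w ! k\<bar> \<le> int n"
proof -
  have "forget w ! k = nat \<bar>w ! k\<bar>" using w k sperms_len[OF w] unfolding forget_def by simp
  moreover have "1 \<le> forget w ! k" "forget w ! k \<le> n" using perms_nth[OF sperms_forget[OF w] k] by auto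
  ultimately show "w ! k \<noteq> 0" "\<bar>w ! k\<bar> \<le> int n" by auto
qed

lemma sperms_absinj:
  assumes w: "w \<in> sperms n" and "k < n" "j < n" "\<bar>w ! k\<bar> = \<bar>w ! j\<bar>"
  shows "k = j"
proof -
  have "forget w ! k = forget w ! j"
    using assms sperms_len[OF w] unfolding forget_def by simp
  then show ?thesis using perms_inj[OF sperms_forget[OF w]] assms by blast
qed

lemma ev_odd: "ev w (- x) = - ev w x"
  unfolding ev_def by (auto simp: sgn_if)

lemma ev_zero: "ev w 0 = 0" unfolding ev_def by simp

lemma ev_pos:
  assumes "1 \<le> k" "k \<le> length w"
  shows "ev w (int k) = w ! (k - 1)"
  using assms unfolding ev_def by simp

lemma ev_out: "x \<notin> Om (length w) \<Longrightarrow> ev w x = x"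
  unfolding ev_def Om_def by auto

lemma ev_Om:
  assumes w: "w \<in> sperms n" and x: "x \<in> Om n"
  shows "ev w x \<in> Om n" "x \<noteq> 0 \<Longrightarrow> ev w x \<noteq> 0"
proof -
  have l: "length w = n" by (rule sperms_len[OF w])
  show "ev w x \<in> Om n" "x \<noteq> 0 \<Longrightarrow> ev w x \<noteq> 0"
  proof (atomize (full), cases "x = 0")
    case True
    then show "ev w x \<in> Om n \<and> (x \<noteq> 0 \<longrightarrow> ev w x \<noteq> 0)" unfolding ev_def Om_def by simp
  next
    case False
    have k: "nat \<bar>x\<bar> - 1 < n" "\<not> nat \<bar>x\<bar> > length w" using x False l unfolding Om_def by auto
    have e: "ev w x = sgn x * w ! (nat \<bar>x\<bar> - 1)" unfolding ev_def using False k by simp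
    have a: "w ! (nat \<bar>x\<bar> - 1) \<noteq> 0" "\<bar>w ! (nat \<bar>x\<bar> - 1)\<bar> \<le> int n" using sperms_nth[OF w k(1)] by auto
    have "\<bar>ev w x\<bar> = \<bar>w ! (nat \<bar>x\<bar> - 1)\<bar>" unfolding e using False by (simp add: abs_mult abs_sgn_eq)
    then have "\<bar>ev w x\<bar> \<le> int n" "ev w x \<noteq> 0" using a by auto
    then show "ev w x \<in> Om n \<and> (x \<noteq> 0 \<longrightarrow> ev w x \<noteq> 0)" unfolding Om_def by auto
  qed
qed

lemma ev_abs:
  assumes w: "w \<in> sperms n" and x: "x \<in> Om n" and x0: "x \<noteq> 0"
  shows "\<bar>ev w x\<bar> = \<bar>w ! (nat \<bar>x\<bar> - 1)\<bar>"
proof -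
  have "\<not> nat \<bar>x\<bar> > length w" using x sperms_len[OF w] unfolding Om_def by auto
  then show ?thesis unfolding ev_def using x0 by (simp add: abs_mult abs_sgn_eq)
qed

lemma ev_inj: assumes w: "w \<in> sperms n" shows "inj_on (ev w) (Om n)"
proof (rule inj_onI)
  fix x y assume x: "x \<in> Om n" and y: "y \<in> Om n" and e: "ev w x = ev w y"
  show "x = y"
  proof (cases "x = 0 \<or> y = 0")
    case True
    show ?thesis
    proof (rule ccontr)
      assume ne: "x \<noteq> y"
      show False
      proof (cases "x = 0")
        case True
        then have "y \<noteq> 0" using ne by simp
        then have "ev w y \<noteq> 0" using ev_Om(2)[OF w y] by blast
        then show False using e True ev_zero[of w] by simp
      next
        case False
        then have "y = 0" using \<open>x = 0 \<or> y = 0\<close> by simp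
        have "ev w x \<noteq> 0" using ev_Om(2)[OF w x] False by blast
        then show False using e \<open>y = 0\<close> ev_zero[of w] by simp
      qed
    qed
  next
    case False
    then have x0: "x \<noteq> 0" and y0: "y \<noteq> 0" by auto
    have kx: "nat \<bar>x\<bar> - 1 < n" using x x0 unfolding Om_def by auto
    have ky: "nat \<bar>y\<bar> - 1 < n" using y y0 unfolding Om_def by auto
    have "\<bar>w ! (nat \<bar>x\<bar> - 1)\<bar> = \<bar>w ! (nat \<bar>y\<bar> - 1)\<bar>" using ev_abs[OF w x x0] ev_abs[OF w y y0] e by simp
    then have "nat \<bar>x\<bar> - 1 = nat \<bar>y\<bar> - 1" using sperms_absinj[OF w kx ky] by simp
    then have ab: "\<bar>x\<bar> = \<bar>y\<bar>" using x0 y0 by auto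
    show ?thesis
    proof (rule ccontr)
      assume "x \<noteq> y"
      then have "x = - y" using ab by (auto simp: abs_if split: if_splits)
      then have "ev w x = - ev w y" using ev_odd by simp
      then have "ev w x = 0" using e by simp
      then show False using ev_Om(2)[OF w x x0] by simp
    qed
  qed
qed

lemma ev_surj: assumes w: "w \<in> sperms n" shows "ev w ` Om n = Om n"
proof (rule endo_inj_surj)
  show "finite (Om n)" unfolding Om_def by simp
  show "ev w ` Om n \<subseteq> Om n" using ev_Om(1)[OF w] by blast
  show "inj_on (ev w) (Om n)" by (rule ev_inj[OF w])
qed

lemma ev_Om_ex: assumes w: "w \<in> sperms n" and y: "y \<in> Om n" shows "\<exists>x\<in>Om n. ev w x = y"
  using ev_surj[OF w] y by (metis imageE)

lemma valB_ev:
  assumes w: "w \<in> sperms n" and i: "i \<le> n"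
  shows "valB w i = ev w (int i)"
proof (cases "i = 0")
  case True
  then show ?thesis unfolding valB_def by (simp add: ev_zero)
next
  case False
  have a: "1 \<le> i" "i \<le> length w" using False i sperms_len[OF w] by auto
  have "valB w i = w ! (i - 1)" unfolding valB_def using False by simp
  also have "\<dots> = ev w (int i)" using ev_pos[OF a] by simp
  finally show ?thesis .
qed

lemma forget_bcomp:
  assumes w: "w \<in> sperms n" and v: "v \<in> sperms n"
  shows "forget (bcomp w v) = compose (forget w) (forget v)"
proof -
  have "nat \<bar>ev w x\<bar> = forget w ! (nat \<bar>x\<bar> - 1)" if xv: "x \<in> set v" for x
  proof -
    obtain k where k0: "k < length v" "v ! k = x" using xv unfolding in_set_conv_nth by blast
    have k: "k < n" using k0(1) sperms_len[OF v] by simp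
    have x0: "x \<noteq> 0" and xO: "x \<in> Om n" using sperms_nth[OF v k] k0(2) unfolding Om_def by auto
    have kk: "nat \<bar>x\<bar> - 1 < n" using xO x0 unfolding Om_def by auto
    show ?thesis using ev_abs[OF w xO x0] kk sperms_len[OF w] unfolding forget_def by simp
  qed
  then show ?thesis unfolding bcomp_def compose_def forget_def by simp
qed

lemma compose_perms:
  assumes u: "u \<in> perms n" and v: "v \<in> perms n"
  shows "compose u v \<in> perms n"
proof -
  have "set (compose u v) = (\<lambda>j. u ! (j - 1)) ` {1..n}" unfolding compose_def using perms_D(2)[OF v] by simp
  also have "\<dots> = set u"
  proof
    show "(\<lambda>j. u ! (j - 1)) ` {1..n} \<subseteq> set u" using perms_D(1)[OF u] by auto
    show "set u \<subseteq> (\<lambda>j. u ! (j - 1)) ` {1..n}"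
    proof
      fix x assume "x \<in> set u"
      then obtain k where k0: "k < length u" "u ! k = x" unfolding in_set_conv_nth by blast
      have "k < n" using k0(1) perms_D(1)[OF u] by simp
      then show "x \<in> (\<lambda>j. u ! (j - 1)) ` {1..n}" using k0(2) by (intro image_eqI[of _ _ "k + 1"]) auto
    qed
  qed
  finally show ?thesis using perms_D[OF u] perms_D[OF v] unfolding perms_def compose_def by simp
qed

lemma bcomp_sperms:
  assumes w: "w \<in> sperms n" and v: "v \<in> sperms n"
  shows "bcomp w v \<in> sperms n"
proof -
  have "forget (bcomp w v) \<in> perms n"
    using forget_bcomp[OF w v] compose_perms[OF sperms_forget[OF w] sperms_forget[OF v]] by simp
  then have "length (forget (bcomp w v)) = n" "set (forget (bcomp w v)) = {1..n}" using perms_D by auto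
  then show ?thesis unfolding sperms_def forget_def by simp
qed

lemma ev_bcomp:
  assumes w: "w \<in> sperms n" and v: "v \<in> sperms n"
  shows "ev (bcomp w v) x = ev w (ev v x)"
proof (cases "x = 0 \<or> nat \<bar>x\<bar> > n")
  case True
  have lw: "length w = n" "length v = n" "length (bcomp w v) = n"
    using sperms_len[OF w] sperms_len[OF v] unfolding bcomp_def by auto
  then show ?thesis using True unfolding ev_def by auto
next
  case False
  have lw: "length w = n" "length v = n" "length (bcomp w v) = n"
    using sperms_len[OF w] sperms_len[OF v] unfolding bcomp_def by auto
  have k: "nat \<bar>x\<bar> - 1 < n" using False by auto
  have e1: "ev (bcomp w v) x = sgn x * ev w (v ! (nat \<bar>x\<bar> - 1))"
    unfolding ev_def[of "bcomp w v" x] using False lw k by (simp add: bcomp_def)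
  have e2: "ev v x = sgn x * v ! (nat \<bar>x\<bar> - 1)" unfolding ev_def[of v x] using False lw by simp
  have "ev w (sgn x * y) = sgn x * ev w y" for y
    using False by (cases "x > 0") (auto simp: ev_odd)
  then show ?thesis using e1 e2 by simp
qed



section \<open>Faces: total symmetric preorders on Om\<close>

definition isface :: "nat \<Rightarrow> (int \<times> int) set \<Rightarrow> bool" where
  "isface n R \<longleftrightarrow> R \<subseteq> Om n \<times> Om n \<and> (\<forall>x\<in>Om n. (x, x) \<in> R)
     \<and> (\<forall>x y z. (x, y) \<in> R \<longrightarrow> (y, z) \<in> R \<longrightarrow> (x, z) \<in> R)
     \<and> (\<forall>x\<in>Om n. \<forall>y\<in>Om n. (x, y) \<in> R \<or> (y, x) \<in> R)
     \<and> (\<forall>x y. (x, y) \<in> R \<longrightarrow> (- y, - x) \<in> R)"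

definition fprod :: "(int \<times> int) set \<Rightarrow> (int \<times> int) set \<Rightarrow> (int \<times> int) set" where
  "fprod R S = {(x, y). (x, y) \<in> R \<and> ((y, x) \<in> R \<longrightarrow> (x, y) \<in> S)}"

definition act :: "int list \<Rightarrow> (int \<times> int) set \<Rightarrow> (int \<times> int) set" where
  "act w R = (\<lambda>(x, y). (ev w x, ev w y)) ` R"

definition pb :: "nat \<Rightarrow> int list \<Rightarrow> (int \<times> int) set \<Rightarrow> (int \<times> int) set" where
  "pb n w R = {(p, q). p \<in> Om n \<and> q \<in> Om n \<and> (ev w p, ev w q) \<in> R}"

definition C0 :: "nat \<Rightarrow> (int \<times> int) set" where
  "C0 n = {(x, y). x \<in> Om n \<and> y \<in> Om n \<and> x \<le> y}"

definition ch :: "nat \<Rightarrow> int list \<Rightarrow> (int \<times> int) set" where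
  "ch n w = act w (C0 n)"

lemma isfaceD:
  assumes "isface n R"
  shows "R \<subseteq> Om n \<times> Om n" "x \<in> Om n \<Longrightarrow> (x, x) \<in> R"
    "(x, y) \<in> R \<Longrightarrow> (y, z) \<in> R \<Longrightarrow> (x, z) \<in> R"
    "x \<in> Om n \<Longrightarrow> y \<in> Om n \<Longrightarrow> (x, y) \<in> R \<or> (y, x) \<in> R"
    "(x, y) \<in> R \<Longrightarrow> (- y, - x) \<in> R"
  using assms unfolding isface_def by blast+

lemma isface_sym: "isface n R \<Longrightarrow> (- y, - x) \<in> R \<longleftrightarrow> (x, y) \<in> R"
  using isfaceD(5)[of n R x y] isfaceD(5)[of n R "- y" "- x"] by auto

lemma isface_memD: "isface n R \<Longrightarrow> (x, y) \<in> R \<Longrightarrow> x \<in> Om n \<and> y \<in> Om n"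
  using isfaceD(1) by blast

lemma fprod_sub: "fprod R S \<subseteq> R" unfolding fprod_def by auto

lemma fprod_assoc: "fprod (fprod R S) T = fprod R (fprod S T)"
  unfolding fprod_def by auto

lemma fprod_face:
  assumes R: "isface n R" and S: "isface n S"
  shows "isface n (fprod R S)"
proof -
  note r = isfaceD[OF R] and s = isfaceD[OF S]
  have sub: "fprod R S \<subseteq> Om n \<times> Om n" using r(1) fprod_sub by blast
  have refl: "\<forall>x\<in>Om n. (x, x) \<in> fprod R S" using r(2) s(2) unfolding fprod_def by auto
  have trans: "\<forall>x y z. (x, y) \<in> fprod R S \<longrightarrow> (y, z) \<in> fprod R S \<longrightarrow> (x, z) \<in> fprod R S"
  proof (intro allI impI)
    fix x y z assume xy: "(x, y) \<in> fprod R S" and yz: "(y, z) \<in> fprod R S"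
    have a: "(x, y) \<in> R" "(y, z) \<in> R" using xy yz unfolding fprod_def by auto
    have "(x, z) \<in> S" if zx: "(z, x) \<in> R"
    proof -
      have "(y, x) \<in> R" using r(3)[OF a(2) zx] .
      then have "(x, y) \<in> S" using xy unfolding fprod_def by auto
      moreover have "(z, y) \<in> R" using r(3)[OF zx a(1)] .
      then have "(y, z) \<in> S" using yz unfolding fprod_def by auto
      ultimately show ?thesis using s(3) by blast
    qed
    then show "(x, z) \<in> fprod R S" using r(3)[OF a] unfolding fprod_def by auto
  qed
  have tot: "\<forall>x\<in>Om n. \<forall>y\<in>Om n. (x, y) \<in> fprod R S \<or> (y, x) \<in> fprod R S"
    using r(4) s(4) unfolding fprod_def by blast
  have sym: "\<forall>x y. (x, y) \<in> fprod R S \<longrightarrow> (- y, - x) \<in> fprod R S"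
  proof (intro allI impI)
    fix x y assume xy: "(x, y) \<in> fprod R S"
    have a: "(- y, - x) \<in> R" using xy r(5) unfolding fprod_def by auto
    have "(- y, - x) \<in> S" if "(- x, - y) \<in> R"
    proof -
      have "(y, x) \<in> R" using that isface_sym[OF R] by simp
      then have "(x, y) \<in> S" using xy unfolding fprod_def by auto
      then show ?thesis using s(5) by blast
    qed
    then show "(- y, - x) \<in> fprod R S" using a unfolding fprod_def by auto
  qed
  show ?thesis unfolding isface_def using sub refl trans tot sym by blast
qed

lemma C0_face: "isface n (C0 n)"
  unfolding isface_def C0_def Om_def by auto

lemma C0_antisym: "(x, y) \<in> C0 n \<Longrightarrow> (y, x) \<in> C0 n \<Longrightarrow> x = y"
  unfolding C0_def by auto

lemma act_mem: "(x, y) \<in> act w R \<longleftrightarrow> (\<exists>p q. (p, q) \<in> R \<and> x = ev w p \<and> y = ev w q)"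
  unfolding act_def by auto

lemma act_ev:
  assumes w: "w \<in> sperms n" and R: "R \<subseteq> Om n \<times> Om n" and p: "p \<in> Om n" and q: "q \<in> Om n"
  shows "(ev w p, ev w q) \<in> act w R \<longleftrightarrow> (p, q) \<in> R"
proof
  assume "(ev w p, ev w q) \<in> act w R"
  then obtain p' q' where pq: "(p', q') \<in> R" "ev w p = ev w p'" "ev w q = ev w q'" unfolding act_mem by blast
  have "p' \<in> Om n" "q' \<in> Om n" using pq(1) R by auto
  then have "p = p'" "q = q'" using pq ev_inj[OF w] p q unfolding inj_on_def by blast+
  then show "(p, q) \<in> R" using pq by simp
next
  assume "(p, q) \<in> R" then show "(ev w p, ev w q) \<in> act w R" unfolding act_def by force
qed

lemma act_sub:
  assumes w: "w \<in> sperms n" and R: "R \<subseteq> Om n \<times> Om n"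
  shows "act w R \<subseteq> Om n \<times> Om n"
  using R ev_Om(1)[OF w] unfolding act_def by auto

lemma pb_sub: "pb n w R \<subseteq> Om n \<times> Om n" unfolding pb_def by auto

lemma pb_act:
  assumes w: "w \<in> sperms n" and R: "R \<subseteq> Om n \<times> Om n"
  shows "pb n w (act w R) = R"
  unfolding pb_def using act_ev[OF w R] R by auto

lemma act_pb:
  assumes w: "w \<in> sperms n" and R: "R \<subseteq> Om n \<times> Om n"
  shows "act w (pb n w R) = R"
proof (rule set_eqI)
  fix z :: "int \<times> int"
  obtain x y where z: "z = (x, y)" by (cases z)
  show "z \<in> act w (pb n w R) \<longleftrightarrow> z \<in> R"
  proof
    assume "z \<in> act w (pb n w R)"
    then show "z \<in> R" unfolding z act_mem pb_def by auto
  next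
    assume zR: "z \<in> R"
    then have "x \<in> Om n" "y \<in> Om n" using R z by auto
    then obtain p q where "p \<in> Om n" "q \<in> Om n" "ev w p = x" "ev w q = y"
      using ev_Om_ex[OF w] by metis
    then have "(p, q) \<in> pb n w R" using zR z unfolding pb_def by auto
    then show "z \<in> act w (pb n w R)" using \<open>ev w p = x\<close> \<open>ev w q = y\<close> unfolding z act_mem by blast
  qed
qed

lemma act_inj:
  assumes w: "w \<in> sperms n" and R: "R \<subseteq> Om n \<times> Om n" and S: "S \<subseteq> Om n \<times> Om n"
    and e: "act w R = act w S"
  shows "R = S"
proof -
  have "R = pb n w (act w R)" by (rule pb_act[OF w R, symmetric])
  also have "\<dots> = pb n w (act w S)" using e by (rule arg_cong)
  also have "\<dots> = S" by (rule pb_act[OF w S])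
  finally show ?thesis .
qed

lemma pb_fprod: "pb n w (fprod R S) = fprod (pb n w R) (pb n w S)"
  unfolding pb_def fprod_def by auto

lemma act_fprod:
  assumes w: "w \<in> sperms n" and R: "R \<subseteq> Om n \<times> Om n" and S: "S \<subseteq> Om n \<times> Om n"
  shows "act w (fprod R S) = fprod (act w R) (act w S)"
proof -
  have s1: "fprod R S \<subseteq> Om n \<times> Om n" using R fprod_sub by blast
  have s2: "fprod (act w R) (act w S) \<subseteq> Om n \<times> Om n" using act_sub[OF w R] fprod_sub by blast
  have "pb n w (fprod (act w R) (act w S)) = fprod R S"
    unfolding pb_fprod pb_act[OF w R] pb_act[OF w S] ..
  then have "act w (pb n w (fprod (act w R) (act w S))) = act w (fprod R S)" by simp
  then show ?thesis using act_pb[OF w s2] by simp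
qed

lemma act_bcomp:
  assumes w: "w \<in> sperms n" and v: "v \<in> sperms n"
  shows "act w (act v R) = act (bcomp w v) R"
  unfolding act_def image_image using ev_bcomp[OF w v] by (simp add: case_prod_beta)

lemma pb_face:
  assumes w: "w \<in> sperms n" and R: "isface n R"
  shows "isface n (pb n w R)"
proof -
  note r = isfaceD[OF R]
  have "\<forall>x\<in>Om n. (x, x) \<in> pb n w R" using r(2) ev_Om(1)[OF w] unfolding pb_def by auto
  moreover have "\<forall>x y z. (x, y) \<in> pb n w R \<longrightarrow> (y, z) \<in> pb n w R \<longrightarrow> (x, z) \<in> pb n w R"
    using r(3) unfolding pb_def by blast
  moreover have "\<forall>x\<in>Om n. \<forall>y\<in>Om n. (x, y) \<in> pb n w R \<or> (y, x) \<in> pb n w R"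
    using r(4) ev_Om(1)[OF w] unfolding pb_def by auto
  moreover have "\<forall>x y. (x, y) \<in> pb n w R \<longrightarrow> (- y, - x) \<in> pb n w R"
  proof (intro allI impI)
    fix x y assume "(x, y) \<in> pb n w R"
    then have "x \<in> Om n" "y \<in> Om n" "(ev w x, ev w y) \<in> R" unfolding pb_def by auto
    moreover have "- x \<in> Om n" "- y \<in> Om n" using calculation unfolding Om_def by auto
    ultimately show "(- y, - x) \<in> pb n w R" using r(5) unfolding pb_def by (auto simp: ev_odd)
  qed
  ultimately show ?thesis unfolding isface_def using pb_sub by blast
qed

lemma act_face:
  assumes w: "w \<in> sperms n" and R: "isface n R"
  shows "isface n (act w R)"
proof -
  have "act w R = act w (pb n w (act w R))" using pb_act[OF w isfaceD(1)[OF R]] by simp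
  note r = isfaceD[OF R]
  have sub: "act w R \<subseteq> Om n \<times> Om n" by (rule act_sub[OF w r(1)])
  have "pb n w (act w R) = R" by (rule pb_act[OF w r(1)])
  have mem: "(x, y) \<in> act w R \<longleftrightarrow> (\<exists>p\<in>Om n. \<exists>q\<in>Om n. x = ev w p \<and> y = ev w q \<and> (p, q) \<in> R)" for x y
    using r(1) unfolding act_mem by blast
  have refl: "\<forall>x\<in>Om n. (x, x) \<in> act w R"
  proof
    fix x assume "x \<in> Om n"
    then obtain p where "p \<in> Om n" "ev w p = x" using ev_Om_ex[OF w] by blast
    then show "(x, x) \<in> act w R" using r(2) mem by blast
  qed
  have trans: "\<forall>x y z. (x, y) \<in> act w R \<longrightarrow> (y, z) \<in> act w R \<longrightarrow> (x, z) \<in> act w R"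
  proof (intro allI impI)
    fix x y z assume "(x, y) \<in> act w R" "(y, z) \<in> act w R"
    then obtain p q q' s where pq: "p \<in> Om n" "q \<in> Om n" "q' \<in> Om n" "s \<in> Om n"
      "x = ev w p" "y = ev w q" "(p, q) \<in> R" "y = ev w q'" "z = ev w s" "(q', s) \<in> R"
      unfolding mem by blast
    then have "q = q'" using ev_inj[OF w] unfolding inj_on_def by metis
    then have "(p, s) \<in> R" using pq r(3) by blast
    then show "(x, z) \<in> act w R" using pq mem by blast
  qed
  have tot: "\<forall>x\<in>Om n. \<forall>y\<in>Om n. (x, y) \<in> act w R \<or> (y, x) \<in> act w R"
  proof (intro ballI)
    fix x y assume "x \<in> Om n" "y \<in> Om n"
    then obtain p q where "p \<in> Om n" "ev w p = x" "q \<in> Om n" "ev w q = y" using ev_Om_ex[OF w] by metis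
    then show "(x, y) \<in> act w R \<or> (y, x) \<in> act w R" using r(4) mem by metis
  qed
  have sym: "\<forall>x y. (x, y) \<in> act w R \<longrightarrow> (- y, - x) \<in> act w R"
  proof (intro allI impI)
    fix x y assume "(x, y) \<in> act w R"
    then obtain p q where pq: "p \<in> Om n" "q \<in> Om n" "x = ev w p" "y = ev w q" "(p, q) \<in> R"
      unfolding mem by blast
    have "(- q, - p) \<in> R" using pq r(5) by blast
    moreover have "- y = ev w (- q)" "- x = ev w (- p)" using pq by (auto simp: ev_odd)
    ultimately show "(- y, - x) \<in> act w R" unfolding act_mem by blast
  qed
  show ?thesis unfolding isface_def using sub refl trans tot sym by blast
qed

lemma ch_face: "w \<in> sperms n \<Longrightarrow> isface n (ch n w)"
  unfolding ch_def using act_face C0_face by blast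

lemma ch_bcomp:
  assumes w: "w \<in> sperms n" and v: "v \<in> sperms n"
  shows "ch n (bcomp w v) = act w (ch n v)"
  unfolding ch_def using act_bcomp[OF w v] by simp

lemma ch_ev:
  assumes w: "w \<in> sperms n" and p: "p \<in> Om n" and q: "q \<in> Om n"
  shows "(ev w p, ev w q) \<in> ch n w \<longleftrightarrow> p \<le> q"
  unfolding ch_def using act_ev[OF w _ p q, of "C0 n"] p q unfolding C0_def by auto

lemma ch_inj:
  assumes w: "w \<in> sperms n" and v: "v \<in> sperms n" and e: "ch n w = ch n v"
  shows "w = v"
proof -
  have cnt: "card {y \<in> Om n. (y, ev u (int i)) \<in> ch n u} = n + 1 + i" if u: "u \<in> sperms n" and i: "i \<le> n" for u i
  proof -
    have iO: "int i \<in> Om n" using i unfolding Om_def by auto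
    have "{y \<in> Om n. (y, ev u (int i)) \<in> ch n u} = ev u ` {p \<in> Om n. p \<le> int i}"
    proof (rule set_eqI, rule iffI)
      fix y assume "y \<in> {y \<in> Om n. (y, ev u (int i)) \<in> ch n u}"
      then have y: "y \<in> Om n" "(y, ev u (int i)) \<in> ch n u" by auto
      obtain p where p: "p \<in> Om n" "ev u p = y" using ev_Om_ex[OF u y(1)] by blast
      then have "p \<le> int i" using ch_ev[OF u p(1) iO] y by simp
      then show "y \<in> ev u ` {p \<in> Om n. p \<le> int i}" using p by auto
    next
      fix y assume "y \<in> ev u ` {p \<in> Om n. p \<le> int i}"
      then obtain p where p: "p \<in> Om n" "p \<le> int i" "y = ev u p" by auto
      then show "y \<in> {y \<in> Om n. (y, ev u (int i)) \<in> ch n u}"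
        using ch_ev[OF u p(1) iO] ev_Om(1)[OF u p(1)] by auto
    qed
    also have "card \<dots> = card {p \<in> Om n. p \<le> int i}"
      by (rule card_image) (use ev_inj[OF u] in \<open>auto intro: inj_on_subset\<close>)
    also have "{p \<in> Om n. p \<le> int i} = {- int n..int i}" using i unfolding Om_def by auto
    finally show ?thesis by simp
  qed
  have EV: "ev w (int i) = ev v (int i)" if i: "1 \<le> i" "i \<le> n" for i
  proof -
    have a: "ev w (int i) \<in> Om n" "ev v (int i) \<in> Om n" using ev_Om(1)[OF w] ev_Om(1)[OF v] i unfolding Om_def by auto
    have cw: "card {y \<in> Om n. (y, ev w (int i)) \<in> ch n w} = n + 1 + i" using cnt[OF w i(2)] .
    have cv: "card {y \<in> Om n. (y, ev v (int i)) \<in> ch n w} = n + 1 + i" using cnt[OF v i(2)] e by simp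
    show ?thesis
    proof (rule ccontr)
      assume ne: "ev w (int i) \<noteq> ev v (int i)"
      have T: "isface n (ch n w)" by (rule ch_face[OF w])
      have anti: "x = y" if h1: "(x, y) \<in> ch n w" and h2: "(y, x) \<in> ch n w" for x y
      proof -
        obtain p q where pq: "(p, q) \<in> C0 n" "x = ev w p" "y = ev w q" using h1 unfolding ch_def act_mem by blast
        have pO: "p \<in> Om n" "q \<in> Om n" using pq(1) unfolding C0_def by auto
        have "p \<le> q" using ch_ev[OF w pO] h1 pq by simp
        moreover have "q \<le> p" using ch_ev[OF w pO(2) pO(1)] h2 pq by simp
        ultimately show ?thesis using pq by simp
      qed
      {
        fix a b assume ab: "a \<in> Om n" "b \<in> Om n" "(a, b) \<in> ch n w" "a \<noteq> b"
        have "{y \<in> Om n. (y, a) \<in> ch n w} \<subset> {y \<in> Om n. (y, b) \<in> ch n w}"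
        proof
          show "{y \<in> Om n. (y, a) \<in> ch n w} \<subseteq> {y \<in> Om n. (y, b) \<in> ch n w}"
            using ab isfaceD(3)[OF T] by blast
          have "b \<in> {y \<in> Om n. (y, b) \<in> ch n w}" using ab isfaceD(2)[OF T] by blast
          moreover have "b \<notin> {y \<in> Om n. (y, a) \<in> ch n w}" using anti ab by blast
          ultimately show "{y \<in> Om n. (y, a) \<in> ch n w} \<noteq> {y \<in> Om n. (y, b) \<in> ch n w}" by blast
        qed
        then have "card {y \<in> Om n. (y, a) \<in> ch n w} < card {y \<in> Om n. (y, b) \<in> ch n w}"
          by (rule psubset_card_mono[rotated]) (rule finite_subset[of _ "Om n"], blast, simp add: Om_def)
      } note strict = this
      have "(ev w (int i), ev v (int i)) \<in> ch n w \<or> (ev v (int i), ev w (int i)) \<in> ch n w"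
        using isfaceD(4)[OF T a] .
      then show False using strict[OF a] strict[OF a(2) a(1)] ne cw cv by auto
    qed
  qed
  have "w ! k = v ! k" if k: "k < n" for k
  proof -
    have "ev w (int (k + 1)) = ev v (int (k + 1))" using EV[of "k + 1"] k by simp
    moreover have "ev w (int (k + 1)) = w ! k" using ev_pos[of "k + 1" w] k sperms_len[OF w] by simp
    moreover have "ev v (int (k + 1)) = v ! k" using ev_pos[of "k + 1" v] k sperms_len[OF v] by simp
    ultimately show ?thesis by simp
  qed
  then show ?thesis using sperms_len[OF w] sperms_len[OF v] by (intro nth_equalityI) auto
qed



section \<open>Every symmetric total order on Om is a chamber\<close>

lemma finite_Om: "finite (Om n)" unfolding Om_def by simp
lemma card_Om: "card (Om n) = 2 * n + 1" unfolding Om_def by simp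

lemma rank_exists:
  assumes T: "isface n T" and anti: "\<And>x y. (x, y) \<in> T \<Longrightarrow> (y, x) \<in> T \<Longrightarrow> x = y"
  shows "\<exists>w\<in>sperms n. ch n w = T"
proof -
  note t = isfaceD[OF T]
  define A where "A x = {y \<in> Om n. (y, x) \<in> T}" for x
  define r where "r x = int (card (A x)) - int n - 1" for x
  have finA: "finite (A x)" for x unfolding A_def using finite_Om by simp
  have rOm: "r x \<in> Om n" if x: "x \<in> Om n" for x
  proof -
    have "A x \<subseteq> Om n" unfolding A_def by auto
    then have "card (A x) \<le> 2 * n + 1" using card_mono[OF finite_Om] card_Om by metis
    moreover have "x \<in> A x" unfolding A_def using x t(2) by auto
    then have "card (A x) \<ge> 1" using finA by (metis One_nat_def card_0_eq empty_iff not_less_eq_eq le0 le_zero_eq)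
    ultimately show ?thesis unfolding r_def Om_def by auto
  qed
  have strict: "r x < r y" if xy: "x \<in> Om n" "y \<in> Om n" "(x, y) \<in> T" "x \<noteq> y" for x y
  proof -
    have "A x \<subset> A y"
    proof
      show "A x \<subseteq> A y" unfolding A_def using xy t(3) by blast
      have "y \<in> A y" unfolding A_def using xy t(2) by blast
      moreover have "y \<notin> A x" unfolding A_def using anti xy by blast
      ultimately show "A x \<noteq> A y" by blast
    qed
    then have "card (A x) < card (A y)" by (rule psubset_card_mono[OF finA])
    then show ?thesis unfolding r_def by simp
  qed
  have Tr: "(x, y) \<in> T \<longleftrightarrow> r x \<le> r y" if xy: "x \<in> Om n" "y \<in> Om n" for x y
  proof
    assume "(x, y) \<in> T" then show "r x \<le> r y" using strict[OF xy] by (cases "x = y") auto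
  next
    assume le: "r x \<le> r y"
    show "(x, y) \<in> T"
    proof (rule ccontr)
      assume "(x, y) \<notin> T"
      then have "(y, x) \<in> T" "y \<noteq> x" using t(4)[OF xy] xy t(2) by auto
      then show False using strict[OF xy(2) xy(1)] le by simp
    qed
  qed
  have rinj: "inj_on r (Om n)"
  proof (rule inj_onI)
    fix x y assume xy: "x \<in> Om n" "y \<in> Om n" "r x = r y"
    then have "(x, y) \<in> T" "(y, x) \<in> T" using Tr by auto
    then show "x = y" using anti by blast
  qed
  have rsurj: "r ` Om n = Om n"
    by (rule endo_inj_surj[OF finite_Om _ rinj]) (use rOm in blast)
  have rodd: "r (- x) = - r x" if x: "x \<in> Om n" for x
  proof -
    define B where "B = {y \<in> Om n. (x, y) \<in> T}"
    have mx: "- x \<in> Om n" using x unfolding Om_def by auto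
    have "A (- x) = uminus ` B"
    proof (rule set_eqI, rule iffI)
      fix y assume "y \<in> A (- x)"
      then have "y \<in> Om n" "(y, - x) \<in> T" unfolding A_def by auto
      moreover have "(- (- y), - x) \<in> T \<longleftrightarrow> (x, - y) \<in> T" by (rule isface_sym[OF T])
      ultimately have "(x, - y) \<in> T" by simp
      moreover have "- y \<in> Om n" using \<open>y \<in> Om n\<close> unfolding Om_def by auto
      ultimately have "- y \<in> B" unfolding B_def by simp
      then show "y \<in> uminus ` B" by force
    next
      fix y assume "y \<in> uminus ` B"
      then obtain z where z: "z \<in> B" "y = - z" by auto
      then have "z \<in> Om n" "(x, z) \<in> T" unfolding B_def by auto
      then have "(- z, - x) \<in> T" "- z \<in> Om n" using isfaceD(5)[OF T] unfolding Om_def by auto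
      then show "y \<in> A (- x)" using z unfolding A_def by simp
    qed
    then have cB: "card (A (- x)) = card B" by (simp add: card_image inj_on_def)
    have un: "A x \<union> B = Om n" unfolding A_def B_def using t(4) x by auto
    have int: "A x \<inter> B = {x}" unfolding A_def B_def using anti x t(2) by auto
    have finB: "finite B" unfolding B_def using finite_Om by simp
    have "card (A x) + card B = card (A x \<union> B) + card (A x \<inter> B)"
      by (rule card_Un_Int[OF finA finB])
    then have "card (A x) + card B = 2 * n + 2" unfolding un int card_Om by simp
    then show ?thesis unfolding r_def cB by simp
  qed
  define ri where "ri = the_inv_into (Om n) r"
  have ri1: "ri y \<in> Om n" "r (ri y) = y" if "y \<in> Om n" for y
    using that rsurj rinj the_inv_into_into[OF rinj, of y "Om n"] f_the_inv_into_f[OF rinj, of y]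
    unfolding ri_def by auto
  have ri2: "ri (r x) = x" if "x \<in> Om n" for x
    using the_inv_into_f_f[OF rinj that] unfolding ri_def .
  have riodd: "ri (- y) = - ri y" if y: "y \<in> Om n" for y
  proof -
    have m: "- ri y \<in> Om n" using ri1(1)[OF y] unfolding Om_def by auto
    have "r (- ri y) = - y" using rodd[OF ri1(1)[OF y]] ri1(2)[OF y] by simp
    then have "ri (- y) = ri (r (- ri y))" by simp
    also have "\<dots> = - ri y" using ri2[OF m] .
    finally show ?thesis .
  qed
  have z0: "0 \<in> Om n" unfolding Om_def by simp
  have r0: "r 0 = 0" using rodd[OF z0] by simp
  have ri0: "ri 0 = 0" using ri2[OF z0] r0 by simp
  have rinz: "ri y \<noteq> 0" if "y \<in> Om n" "y \<noteq> 0" for y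
    using ri1(2)[OF that(1)] r0 that(2) by auto
  define w where "w = map (\<lambda>i. ri (int i)) [1..<n+1]"
  have lw: "length w = n" unfolding w_def by simp
  have wk: "w ! k = ri (int (k + 1))" if "k < n" for k
    unfolding w_def using that by (simp del: upt_Suc)
  have iO: "int i \<in> Om n" if "i \<in> {1..n}" for i using that unfolding Om_def by auto
  define g where "g i = nat \<bar>ri (int i)\<bar>" for i
  have gin: "g ` {1..n} \<subseteq> {1..n}"
  proof
    fix z assume "z \<in> g ` {1..n}"
    then obtain i where i: "i \<in> {1..n}" "z = g i" by blast
    have "ri (int i) \<in> Om n" "ri (int i) \<noteq> 0" using ri1(1)[OF iO[OF i(1)]] rinz[OF iO[OF i(1)]] i(1) by auto
    then show "z \<in> {1..n}" unfolding i(2) g_def Om_def by auto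
  qed
  have ginj: "inj_on g {1..n}"
  proof (rule inj_onI)
    fix a b assume a: "a \<in> {1..n}" and b: "b \<in> {1..n}" and e: "g a = g b"
    have "\<bar>ri (int a)\<bar> = \<bar>ri (int b)\<bar>" using e unfolding g_def by simp
    then have "ri (int a) = ri (int b) \<or> ri (int a) = - ri (int b)" by (auto simp: abs_if split: if_splits)
    moreover have "ri (int a) = ri (int b) \<Longrightarrow> int a = int b"
      using ri1(2)[OF iO[OF a]] ri1(2)[OF iO[OF b]] by metis
    moreover have "ri (int a) = - ri (int b) \<Longrightarrow> int a = - int b"
    proof -
      assume h: "ri (int a) = - ri (int b)"
      have "- int b \<in> Om n" using b unfolding Om_def by auto
      then have "ri (- int b) = - ri (int b)" using riodd[OF iO[OF b]] by simp
      then have "r (ri (int a)) = r (ri (- int b))" using h by simp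
      then show "int a = - int b" using ri1(2)[OF iO[OF a]] ri1(2)[OF \<open>- int b \<in> Om n\<close>] by simp
    qed
    ultimately show "a = b" using a b by auto
  qed
  have "g ` {1..n} = {1..n}" by (rule endo_inj_surj[OF _ gin ginj]) simp
  moreover have "set (map (\<lambda>x. nat \<bar>x\<bar>) w) = g ` {1..n}"
    unfolding w_def g_def by (auto simp: atLeastLessThanSuc_atLeastAtMost image_image)
  ultimately have ws: "w \<in> sperms n" unfolding sperms_def using lw by simp
  have evw: "ev w x = ri x" if x: "x \<in> Om n" for x
  proof -
    consider "x = 0" | "x > 0" | "x < 0" by linarith
    then show ?thesis
    proof cases
      case 1 then show ?thesis using ri0 ev_zero by simp
    next
      case 2
      then have k: "1 \<le> nat x" "nat x \<le> n" using x unfolding Om_def by auto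
      have "ev w (int (nat x)) = w ! (nat x - 1)" using ev_pos[of "nat x" w] k lw by simp
      also have "\<dots> = ri (int (nat x - 1 + 1))" using wk k by simp
      finally show ?thesis using 2 k by simp
    next
      case 3
      have mx: "- x \<in> Om n" "- x > 0" using x 3 unfolding Om_def by auto
      then have k: "1 \<le> nat (- x)" "nat (- x) \<le> n" unfolding Om_def by auto
      have "ev w (int (nat (- x))) = w ! (nat (- x) - 1)" using ev_pos[of "nat (- x)" w] k lw by simp
      also have "\<dots> = ri (int (nat (- x) - 1 + 1))" using wk k by simp
      finally have "ev w (- x) = ri (- x)" using mx k by simp
      then have "ev w x = - ri (- x)" using ev_odd[of w "- x"] by simp
      also have "\<dots> = ri x" using riodd[OF mx(1)] by simp
      finally show ?thesis .
    qed
  qed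
  have "ch n w = T"
  proof (rule set_eqI)
    fix z :: "int \<times> int"
    obtain x y where z: "z = (x, y)" by (cases z)
    show "z \<in> ch n w \<longleftrightarrow> z \<in> T"
    proof
      assume "z \<in> ch n w"
      then obtain p q where pq: "(p, q) \<in> C0 n" "x = ev w p" "y = ev w q" unfolding z ch_def act_mem by blast
      then have pO: "p \<in> Om n" "q \<in> Om n" "p \<le> q" unfolding C0_def by auto
      have "x = ri p" "y = ri q" using pq evw pO by auto
      moreover have "r (ri p) \<le> r (ri q)" using ri1(2) pO by simp
      ultimately show "z \<in> T" using Tr ri1(1) pO z by simp
    next
      assume "z \<in> T"
      then have xy: "x \<in> Om n" "y \<in> Om n" "(x, y) \<in> T" using t(1) z by auto
      then have "r x \<le> r y" using Tr by simp
      then have "(r x, r y) \<in> C0 n" using rOm xy unfolding C0_def by auto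
      moreover have "x = ev w (r x)" "y = ev w (r y)" using evw rOm ri2 xy by auto
      ultimately show "z \<in> ch n w" unfolding z ch_def act_mem by blast
    qed
  qed
  then show ?thesis using ws by blast
qed

definition wof :: "nat \<Rightarrow> (int \<times> int) set \<Rightarrow> int list" where
  "wof n H = (THE w. w \<in> sperms n \<and> fprod H (C0 n) = ch n w)"

lemma wof:
  assumes H: "isface n H"
  shows "wof n H \<in> sperms n" "fprod H (C0 n) = ch n (wof n H)"
proof -
  have F: "isface n (fprod H (C0 n))" by (rule fprod_face[OF H C0_face])
  have anti: "x = y" if "(x, y) \<in> fprod H (C0 n)" "(y, x) \<in> fprod H (C0 n)" for x y
  proof -
    have "(x, y) \<in> H" "(y, x) \<in> H" using that fprod_sub by blast+
    then have "(x, y) \<in> C0 n" "(y, x) \<in> C0 n" using that unfolding fprod_def by auto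
    then show ?thesis by (rule C0_antisym)
  qed
  obtain w where w: "w \<in> sperms n" "ch n w = fprod H (C0 n)" using rank_exists[OF F anti] by blast
  have "\<exists>!w. w \<in> sperms n \<and> fprod H (C0 n) = ch n w"
    using w ch_inj by (intro ex1I[of _ w]) auto
  then have "wof n H \<in> sperms n \<and> fprod H (C0 n) = ch n (wof n H)"
    unfolding wof_def by (rule theI')
  then show "wof n H \<in> sperms n" "fprod H (C0 n) = ch n (wof n H)" by auto
qed

lemma wof_unique:
  assumes H: "isface n H" and w: "w \<in> sperms n" and e: "fprod H (C0 n) = ch n w"
  shows "wof n H = w"
  using ch_inj[OF wof(1)[OF H] w] wof(2)[OF H] e by simp



section \<open>Standard faces and types\<close>

definition beta :: "nat set \<Rightarrow> int \<Rightarrow> int" where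
  "beta L x = (if 0 \<le> x then int (card {l \<in> L. int l < x}) else - int (card {l \<in> L. int l < - x}))"

definition edge :: "nat set \<Rightarrow> int \<Rightarrow> bool" where
  "edge L t = (if 0 \<le> t then nat t \<in> L else nat (- t - 1) \<in> L)"

definition SL :: "nat \<Rightarrow> nat set \<Rightarrow> (int \<times> int) set" where
  "SL n L = {(x, y). x \<in> Om n \<and> y \<in> Om n \<and> beta L x \<le> beta L y}"

definition ftyp :: "nat \<Rightarrow> (int \<times> int) set \<Rightarrow> nat set" where
  "ftyp n R = {i \<in> {..<n}. \<exists>x\<in>Om n. card {y \<in> Om n. (y, x) \<in> R} = n + 1 + i}"

lemma beta_mono:
  assumes L: "finite L" and xy: "x \<le> y"
  shows "beta L x \<le> beta L y"
proof -
  have c: "card {l \<in> L. int l < a} \<le> card {l \<in> L. int l < b}" if "a \<le> b" for a b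
    by (rule card_mono) (use L that in auto)
  show ?thesis unfolding beta_def using c[of x y] c[of "- y" "- x"] xy by auto
qed

lemma beta_odd: "beta L (- x) = - beta L x"
  unfolding beta_def by auto

lemma beta_step_nonneg:
  assumes L: "finite L" and t: "0 \<le> t"
  shows "beta L (t + 1) = beta L t + (if nat t \<in> L then 1 else 0)"
proof -
  have "int l < t + 1 \<longleftrightarrow> int l < t \<or> l = nat t" for l using t by auto
  then have e: "{l \<in> L. int l < t + 1} = {l \<in> L. int l < t} \<union> (if nat t \<in> L then {nat t} else {})"
    by auto
  have "card {l \<in> L. int l < t + 1} = card {l \<in> L. int l < t} + (if nat t \<in> L then 1 else 0)"
    unfolding e using L by (auto simp: card_insert_if)
  then show ?thesis unfolding beta_def using t by simp
qed

lemma beta_step: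
  assumes L: "finite L"
  shows "beta L (t + 1) = beta L t + (if edge L t then 1 else 0)"
proof (cases "0 \<le> t")
  case True
  then show ?thesis using beta_step_nonneg[OF L True] unfolding edge_def by simp
next
  case False
  define s where "s = - t - 1"
  have s: "0 \<le> s" using False unfolding s_def by simp
  have "beta L (t + 1) = - beta L s" using beta_odd[of L s] unfolding s_def by (simp add: add.commute)
  moreover have "beta L t = - beta L (s + 1)" using beta_odd[of L "s + 1"] unfolding s_def by simp
  ultimately show ?thesis using beta_step_nonneg[OF L s] False unfolding edge_def s_def by simp
qed

lemma int_chain:
  assumes "q \<le> p" and step: "\<And>t. q \<le> t \<Longrightarrow> t < p \<Longrightarrow> S (t + 1) t" and refl: "S q q"
    and trans: "\<And>a b c. S a b \<Longrightarrow> S b c \<Longrightarrow> S a c"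
  shows "S p (q::int)"
proof -
  have "S (q + int k) q" if "q + int k \<le> p" for k
    using that
  proof (induction k)
    case 0 then show ?case using refl by simp
  next
    case (Suc k)
    have "S (q + int k) q" using Suc by simp
    moreover have "S (q + int k + 1) (q + int k)" using step[of "q + int k"] Suc.prems by simp
    ultimately have "S (q + int k + 1) q" using trans by blast
    then show ?case by (simp add: algebra_simps)
  qed
  from this[of "nat (p - q)"] assms(1) show ?thesis by simp
qed

lemma SL_face:
  assumes L: "finite L"
  shows "isface n (SL n L)"
  unfolding isface_def SL_def
  using beta_odd[of L] by (auto simp: Om_def)

lemma SL_sub: "SL n L \<subseteq> Om n \<times> Om n" unfolding SL_def by auto

lemma Om_neg: "x \<in> Om n \<Longrightarrow> - x \<in> Om n" unfolding Om_def by auto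

lemma mono_SL:
  assumes P: "isface n P" and mono: "\<And>p q. p \<in> Om n \<Longrightarrow> q \<in> Om n \<Longrightarrow> p \<le> q \<Longrightarrow> (p, q) \<in> P"
  shows "P = SL n {i \<in> {..<n}. (int i + 1, int i) \<notin> P}"
proof -
  define L where "L = {i \<in> {..<n}. (int i + 1, int i) \<notin> P}"
  have finL: "finite L" unfolding L_def by simp
  note pp = isfaceD[OF P]
  have key: "(t + 1, t) \<in> P \<longleftrightarrow> beta L (t + 1) = beta L t" if t: "- int n \<le> t" "t < int n" for t
  proof (cases "0 \<le> t")
    case True
    have "(t + 1, t) \<in> P \<longleftrightarrow> nat t \<notin> L" unfolding L_def using True t by auto
    then show ?thesis using beta_step[OF finL, of t] True unfolding edge_def by simp
  next
    case False
    define s where "s = - t - 1"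
    have s: "0 \<le> s" "s < int n" using False t unfolding s_def by auto
    have e: "(- (- t - 1), - (- t)) = (t + 1, t)" by simp
    have "(t + 1, t) \<in> P \<longleftrightarrow> (- t, - t - 1) \<in> P" using isface_sym[OF P, of "- t - 1" "- t"] unfolding e .
    also have "\<dots> \<longleftrightarrow> (s + 1, s) \<in> P" unfolding s_def by (simp add: algebra_simps)
    also have "\<dots> \<longleftrightarrow> nat s \<notin> L" unfolding L_def using s by auto
    finally show ?thesis using beta_step[OF finL, of t] False unfolding edge_def s_def by simp
  qed
  have "P = SL n L"
  proof (rule set_eqI)
    fix z :: "int \<times> int"
    obtain p q where z: "z = (p, q)" by (cases z)
    show "z \<in> P \<longleftrightarrow> z \<in> SL n L"
    proof (cases "p \<in> Om n \<and> q \<in> Om n")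
      case False
      then show ?thesis using pp(1) unfolding z SL_def by auto
    next
      case True
      then have pO: "p \<in> Om n" "q \<in> Om n" by auto
      show ?thesis
      proof (cases "p \<le> q")
        case True
        then show ?thesis using mono[OF pO True] beta_mono[OF finL True] pO unfolding z SL_def by auto
      next
        case False
        then have qp: "q \<le> p" by simp
        have rng: "- int n \<le> t \<and> t < int n" if "q \<le> t" "t < p" for t
          using that pO unfolding Om_def by auto
        have A: "(p, q) \<in> P \<longleftrightarrow> (\<forall>t. q \<le> t \<and> t < p \<longrightarrow> (t + 1, t) \<in> P)"
        proof
          assume pq: "(p, q) \<in> P"
          show "\<forall>t. q \<le> t \<and> t < p \<longrightarrow> (t + 1, t) \<in> P"
          proof (intro allI impI)
            fix t assume "q \<le> t \<and> t < p"
            then have tO: "t \<in> Om n" "t + 1 \<in> Om n" using pO unfolding Om_def by auto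
            have "(t + 1, p) \<in> P" using mono[OF tO(2) pO(1)] \<open>q \<le> t \<and> t < p\<close> by simp
            moreover have "(q, t) \<in> P" using mono[OF pO(2) tO(1)] \<open>q \<le> t \<and> t < p\<close> by simp
            ultimately show "(t + 1, t) \<in> P" using pq pp(3) by blast
          qed
        next
          assume h: "\<forall>t. q \<le> t \<and> t < p \<longrightarrow> (t + 1, t) \<in> P"
          have st: "(t + 1, t) \<in> P" if "q \<le> t" "t < p" for t using h that by simp
          have "(\<lambda>a b. (a, b) \<in> P) p q"
            by (rule int_chain[of q p "\<lambda>a b. (a, b) \<in> P", OF qp]) (use st pp(2)[OF pO(2)] pp(3) in auto)
          then show "(p, q) \<in> P" by simp
        qed
        have B: "beta L p \<le> beta L q \<longleftrightarrow> (\<forall>t. q \<le> t \<and> t < p \<longrightarrow> beta L (t + 1) = beta L t)"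
        proof
          assume le: "beta L p \<le> beta L q"
          show "\<forall>t. q \<le> t \<and> t < p \<longrightarrow> beta L (t + 1) = beta L t"
          proof (intro allI impI)
            fix t assume t: "q \<le> t \<and> t < p"
            have "beta L q \<le> beta L t" "beta L t \<le> beta L (t + 1)" "beta L (t + 1) \<le> beta L p"
              using beta_mono[OF finL] t by auto
            then show "beta L (t + 1) = beta L t" using le by simp
          qed
        next
          assume h: "\<forall>t. q \<le> t \<and> t < p \<longrightarrow> beta L (t + 1) = beta L t"
          have st: "beta L (t + 1) \<le> beta L t" if "q \<le> t" "t < p" for t using h that by simp
          have "(\<lambda>a b. beta L a \<le> beta L b) p q"
            by (rule int_chain[of q p "\<lambda>a b. beta L a \<le> beta L b", OF qp]) (use st in auto)
          then show "beta L p \<le> beta L q" by simp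
        qed
        have "(p, q) \<in> P \<longleftrightarrow> beta L p \<le> beta L q" unfolding A B using key rng by auto
        then show ?thesis using pO unfolding z SL_def by simp
      qed
    qed
  qed
  then show ?thesis unfolding L_def .
qed

lemma typ_SL:
  assumes L: "L \<subseteq> {..<n}"
  shows "ftyp n (SL n L) = L"
proof -
  have finL: "finite L" using L finite_subset by blast
  define D where "D x = {y \<in> Om n. beta L y \<le> beta L x}" for x
  have Deq: "{y \<in> Om n. (y, x) \<in> SL n L} = D x" if "x \<in> Om n" for x
    using that unfolding D_def SL_def by auto
  have finD: "finite (D x)" for x unfolding D_def using finite_Om by simp
  have "i \<in> L \<longleftrightarrow> (\<exists>x\<in>Om n. card (D x) = n + 1 + i)" if i: "i < n" for i
  proof
    assume iL: "i \<in> L"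
    have iO: "int i \<in> Om n" using i unfolding Om_def by auto
    have "D (int i) = {- int n..int i}"
    proof (rule set_eqI, rule iffI)
      fix y assume y: "y \<in> D (int i)"
      show "y \<in> {- int n..int i}"
      proof (rule ccontr)
        assume "y \<notin> {- int n..int i}"
        then have "int i + 1 \<le> y" using y unfolding D_def Om_def by auto
        then have "beta L (int i + 1) \<le> beta L y" by (rule beta_mono[OF finL])
        moreover have "beta L (int i + 1) = beta L (int i) + 1" using beta_step[OF finL, of "int i"] iL unfolding edge_def by simp
        ultimately show False using y unfolding D_def by simp
      qed
    next
      fix y assume "y \<in> {- int n..int i}"
      then show "y \<in> D (int i)" unfolding D_def Om_def using beta_mono[OF finL, of y "int i"] i by auto
    qed
    then have "card (D (int i)) = n + 1 + i" by simp
    then show "\<exists>x\<in>Om n. card (D x) = n + 1 + i" using iO by blast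
  next
    assume "\<exists>x\<in>Om n. card (D x) = n + 1 + i"
    then obtain x where x: "x \<in> Om n" "card (D x) = n + 1 + i" by blast
    show "i \<in> L"
    proof (rule ccontr)
      assume iL: "i \<notin> L"
      have down: "z \<in> D x" if "y \<in> D x" "z \<in> Om n" "z \<le> y" for y z
        using that beta_mono[OF finL, of z y] unfolding D_def by auto
      have iD: "int i \<in> D x"
      proof (rule ccontr)
        assume ni: "int i \<notin> D x"
        have "D x \<subseteq> {- int n..int i - 1}"
        proof
          fix y assume y: "y \<in> D x"
          have "\<not> int i \<le> y" using down[OF y, of "int i"] ni i unfolding Om_def by auto
          then show "y \<in> {- int n..int i - 1}" using y unfolding D_def Om_def by auto
        qed
        then have "card (D x) \<le> card {- int n..int i - 1}" by (rule card_mono[rotated]) simp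
        then show False using x by simp
      qed
      have i1: "int i + 1 \<in> Om n" using i unfolding Om_def by auto
      have "beta L (int i + 1) = beta L (int i)" using beta_step[OF finL, of "int i"] iL unfolding edge_def by simp
      then have i1D: "int i + 1 \<in> D x" using iD i1 unfolding D_def by simp
      have "{- int n..int i + 1} \<subseteq> D x"
      proof
        fix y assume "y \<in> {- int n..int i + 1}"
        then show "y \<in> D x" using down[OF i1D, of y] i unfolding Om_def by auto
      qed
      then have "card {- int n..int i + 1} \<le> card (D x)" by (rule card_mono[OF finD])
      then show False using x by simp
    qed
  qed
  then show ?thesis unfolding ftyp_def using Deq L by auto
qed

lemma typ_act:
  assumes w: "w \<in> sperms n" and R: "R \<subseteq> Om n \<times> Om n"
  shows "ftyp n (act w R) = ftyp n R"
proof -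
  have c: "card {y \<in> Om n. (y, ev w x) \<in> act w R} = card {y \<in> Om n. (y, x) \<in> R}" if x: "x \<in> Om n" for x
  proof -
    have "{y \<in> Om n. (y, ev w x) \<in> act w R} = ev w ` {y \<in> Om n. (y, x) \<in> R}"
    proof (rule set_eqI, rule iffI)
      fix y assume "y \<in> {y \<in> Om n. (y, ev w x) \<in> act w R}"
      then have y: "y \<in> Om n" "(y, ev w x) \<in> act w R" by auto
      obtain y' where y': "y' \<in> Om n" "ev w y' = y" using ev_Om_ex[OF w y(1)] by blast
      then have "(y', x) \<in> R" using act_ev[OF w R y'(1) x] y by simp
      then show "y \<in> ev w ` {y \<in> Om n. (y, x) \<in> R}" using y' by blast
    next
      fix y assume "y \<in> ev w ` {y \<in> Om n. (y, x) \<in> R}"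
      then obtain y' where y': "y' \<in> Om n" "(y', x) \<in> R" "y = ev w y'" by blast
      then show "y \<in> {y \<in> Om n. (y, ev w x) \<in> act w R}"
        using act_ev[OF w R y'(1) x] ev_Om(1)[OF w y'(1)] by simp
    qed
    also have "card \<dots> = card {y \<in> Om n. (y, x) \<in> R}"
      by (rule card_image) (rule inj_on_subset[OF ev_inj[OF w]], blast)
    finally show ?thesis .
  qed
  have "(\<exists>x\<in>Om n. card {y \<in> Om n. (y, x) \<in> act w R} = m) \<longleftrightarrow> (\<exists>x\<in>Om n. card {y \<in> Om n. (y, x) \<in> R} = m)" for m
  proof
    assume "\<exists>x\<in>Om n. card {y \<in> Om n. (y, x) \<in> act w R} = m"
    then obtain x where x: "x \<in> Om n" "card {y \<in> Om n. (y, x) \<in> act w R} = m" by blast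
    obtain x' where x': "x' \<in> Om n" "ev w x' = x" using ev_Om_ex[OF w x(1)] by blast
    have "card {y \<in> Om n. (y, x') \<in> R} = m" using c[OF x'(1)] x x'(2) by simp
    then show "\<exists>x\<in>Om n. card {y \<in> Om n. (y, x) \<in> R} = m" using x'(1) by blast
  next
    assume "\<exists>x\<in>Om n. card {y \<in> Om n. (y, x) \<in> R} = m"
    then obtain x where x: "x \<in> Om n" "card {y \<in> Om n. (y, x) \<in> R} = m" by blast
    have "card {y \<in> Om n. (y, ev w x) \<in> act w R} = m" using c[OF x(1)] x(2) by simp
    then show "\<exists>x\<in>Om n. card {y \<in> Om n. (y, x) \<in> act w R} = m"
      using ev_Om(1)[OF w x(1)] by blast
  qed
  then show ?thesis unfolding ftyp_def by simp
qed

lemma typ_sub: "ftyp n R \<subseteq> {..<n}" unfolding ftyp_def by auto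

lemma DesB_sub: "n \<ge> 1 \<Longrightarrow> DesB n w \<subseteq> {..<n}" unfolding DesB_def by auto

theorem claimAB:
  assumes H: "isface n H" and n1: "n \<ge> 1"
  shows "H = act (wof n H) (SL n (ftyp n H))" "DesB n (wof n H) \<subseteq> ftyp n H"
proof -
  define w where "w = wof n H"
  have w: "w \<in> sperms n" "fprod H (C0 n) = ch n w" using wof[OF H] unfolding w_def by auto
  define H' where "H' = pb n w H"
  have H'f: "isface n H'" unfolding H'_def by (rule pb_face[OF w(1) H])
  have actH': "act w H' = H" unfolding H'_def by (rule act_pb[OF w(1) isfaceD(1)[OF H]])
  define D where "D = pb n w (C0 n)"
  have C0sub: "C0 n \<subseteq> Om n \<times> Om n" unfolding C0_def by auto
  have eq: "fprod H' D = C0 n"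
  proof -
    have "pb n w (fprod H (C0 n)) = fprod H' D" unfolding H'_def D_def by (rule pb_fprod)
    moreover have "pb n w (ch n w) = C0 n" unfolding ch_def by (rule pb_act[OF w(1) C0sub])
    ultimately show ?thesis using w(2) by simp
  qed
  have mono: "(p, q) \<in> H'" if "p \<in> Om n" "q \<in> Om n" "p \<le> q" for p q
  proof -
    have "(p, q) \<in> C0 n" using that unfolding C0_def by auto
    then show ?thesis using eq fprod_sub by blast
  qed
  define L where "L = {i \<in> {..<n}. (int i + 1, int i) \<notin> H'}"
  have H'L: "H' = SL n L" unfolding L_def by (rule mono_SL[OF H'f mono])
  have Lsub: "L \<subseteq> {..<n}" unfolding L_def by auto
  have tH: "ftyp n H = L"
  proof -
    have "ftyp n H = ftyp n (act w (SL n L))" using actH' H'L by simp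
    also have "\<dots> = ftyp n (SL n L)" by (rule typ_act[OF w(1) SL_sub])
    also have "\<dots> = L" by (rule typ_SL[OF Lsub])
    finally show ?thesis .
  qed
  show "H = act (wof n H) (SL n (ftyp n H))" using actH' H'L tH unfolding w_def by simp
  show "DesB n (wof n H) \<subseteq> ftyp n H"
  proof
    fix i assume iD: "i \<in> DesB n (wof n H)"
    then have i: "i < n" using DesB_sub[OF n1] by auto
    show "i \<in> ftyp n H"
    proof (rule ccontr)
      assume "i \<notin> ftyp n H"
      then have "(int i + 1, int i) \<in> H'" using tH i unfolding L_def by auto
      moreover have iO: "int i \<in> Om n" "int i + 1 \<in> Om n" using i unfolding Om_def by auto
      moreover have "(int i, int i + 1) \<in> C0 n" using iO unfolding C0_def by auto
      ultimately have "(int i, int i + 1) \<in> D" using eq unfolding fprod_def by blast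
      then have "ev w (int i) \<le> ev w (int i + 1)" unfolding D_def pb_def C0_def by auto
      moreover have "valB w i = ev w (int i)" "valB w (i + 1) = ev w (int i + 1)"
        using valB_ev[OF w(1), of i] valB_ev[OF w(1), of "i + 1"] i by (auto simp: add.commute)
      moreover have "valB w i > valB w (i + 1)" using iD unfolding w_def DesB_def by auto
      ultimately show False by simp
    qed
  qed
qed

theorem claimC:
  assumes w: "w \<in> sperms n" and L: "L \<subseteq> {..<n}" and DL: "DesB n w \<subseteq> L" and n1: "n \<ge> 1"
  shows "fprod (act w (SL n L)) (C0 n) = ch n w"
proof -
  have finL: "finite L" using L finite_subset by blast
  have stepinc: "ev w t \<le> ev w (t + 1)" if t: "- int n \<le> t" "t < int n" "\<not> edge L t" for t
  proof (cases "0 \<le> t")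
    case True
    have "nat t \<notin> L" using t True unfolding edge_def by simp
    then have "nat t \<notin> DesB n w" using DL by blast
    then have "\<not> valB w (nat t) > valB w (nat t + 1)" using t True unfolding DesB_def by auto
    moreover have "valB w (nat t) = ev w t" "valB w (nat t + 1) = ev w (t + 1)"
      using valB_ev[OF w, of "nat t"] valB_ev[OF w, of "nat t + 1"] t True by (auto simp: add.commute)
    ultimately show ?thesis by simp
  next
    case False
    define s where "s = - t - 1"
    have s: "0 \<le> s" "s < int n" using t False unfolding s_def by auto
    have "nat s \<notin> L" using t False unfolding edge_def s_def by simp
    then have "nat s \<notin> DesB n w" using DL by blast
    then have "\<not> valB w (nat s) > valB w (nat s + 1)" using s unfolding DesB_def by auto
    moreover have "valB w (nat s) = ev w s" "valB w (nat s + 1) = ev w (s + 1)"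
      using valB_ev[OF w, of "nat s"] valB_ev[OF w, of "nat s + 1"] s by (auto simp: add.commute)
    ultimately have "ev w s \<le> ev w (s + 1)" by simp
    moreover have "ev w t = - ev w (s + 1)" "ev w (t + 1) = - ev w s"
      using ev_odd[of w "s + 1"] ev_odd[of w s] unfolding s_def by (auto simp: add.commute)
    ultimately show ?thesis by simp
  qed
  have blockinc: "ev w p < ev w q" if pq: "p \<in> Om n" "q \<in> Om n" "p < q" "beta L p = beta L q" for p q
  proof -
    have "ev w p \<le> ev w q"
    proof (rule int_chain[where S="\<lambda>a b. ev w b \<le> ev w a"])
      show "p \<le> q" using pq by simp
      fix t assume t: "p \<le> t" "t < q"
      have "beta L p \<le> beta L t" "beta L t \<le> beta L (t + 1)" "beta L (t + 1) \<le> beta L q"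
        using beta_mono[OF finL] t by auto
      then have "beta L (t + 1) = beta L t" using pq by simp
      then have "\<not> edge L t" using beta_step[OF finL, of t] by auto
      then show "ev w t \<le> ev w (t + 1)" using stepinc t pq unfolding Om_def by auto
    qed auto
    moreover have "ev w p \<noteq> ev w q" using ev_inj[OF w] pq unfolding inj_on_def by auto
    ultimately show ?thesis by simp
  qed
  define D where "D = pb n w (C0 n)"
  have Dm: "(p, q) \<in> D \<longleftrightarrow> p \<in> Om n \<and> q \<in> Om n \<and> ev w p \<le> ev w q" for p q
    unfolding D_def pb_def C0_def using ev_Om(1)[OF w] by auto
  have key: "fprod (SL n L) D = C0 n"
  proof (rule set_eqI)
    fix z :: "int \<times> int"
    obtain p q where z: "z = (p, q)" by (cases z)
    show "z \<in> fprod (SL n L) D \<longleftrightarrow> z \<in> C0 n"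
    proof (cases "p \<in> Om n \<and> q \<in> Om n")
      case False
      then show ?thesis unfolding z fprod_def SL_def C0_def by auto
    next
      case True
      then have pO: "p \<in> Om n" "q \<in> Om n" by auto
      have "(beta L p \<le> beta L q \<and> (beta L q \<le> beta L p \<longrightarrow> ev w p \<le> ev w q)) \<longleftrightarrow> p \<le> q"
      proof
        assume h: "beta L p \<le> beta L q \<and> (beta L q \<le> beta L p \<longrightarrow> ev w p \<le> ev w q)"
        show "p \<le> q"
        proof (rule ccontr)
          assume "\<not> p \<le> q"
          then have qp: "q < p" by simp
          then have "beta L q \<le> beta L p" using beta_mono[OF finL] by simp
          then have "beta L q = beta L p" "ev w p \<le> ev w q" using h by auto
          moreover have "ev w q < ev w p" using blockinc[OF pO(2) pO(1) qp] calculation(1) by simp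
          ultimately show False by simp
        qed
      next
        assume pq: "p \<le> q"
        then have "beta L p \<le> beta L q" using beta_mono[OF finL] by simp
        moreover have "ev w p \<le> ev w q" if "beta L q \<le> beta L p"
        proof (cases "p = q")
          case True then show ?thesis by simp
        next
          case False
          then have "p < q" using pq by simp
          moreover have "beta L p = beta L q" using that \<open>beta L p \<le> beta L q\<close> by simp
          ultimately show ?thesis using blockinc[OF pO] by fastforce
        qed
        ultimately show "beta L p \<le> beta L q \<and> (beta L q \<le> beta L p \<longrightarrow> ev w p \<le> ev w q)" by blast
      qed
      then show ?thesis unfolding z fprod_def SL_def C0_def using pO Dm by auto
    qed
  qed
  have s1: "fprod (act w (SL n L)) (C0 n) \<subseteq> Om n \<times> Om n"
    using act_sub[OF w SL_sub] fprod_sub by blast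
  have C0sub: "C0 n \<subseteq> Om n \<times> Om n" unfolding C0_def by auto
  have "pb n w (fprod (act w (SL n L)) (C0 n)) = fprod (SL n L) D"
    unfolding pb_fprod D_def pb_act[OF w SL_sub] ..
  then have "act w (pb n w (fprod (act w (SL n L)) (C0 n))) = act w (C0 n)" using key by simp
  then show ?thesis using act_pb[OF w s1] unfolding ch_def by simp
qed

lemma wof_SL:
  assumes w: "w \<in> sperms n" and L: "L \<subseteq> {..<n}" and DL: "DesB n w \<subseteq> L" and n1: "n \<ge> 1"
  shows "isface n (act w (SL n L))" "wof n (act w (SL n L)) = w" "ftyp n (act w (SL n L)) = L"
proof -
  have finL: "finite L" using L finite_subset by blast
  show f: "isface n (act w (SL n L))" by (rule act_face[OF w SL_face[OF finL]])
  show "wof n (act w (SL n L)) = w" by (rule wof_unique[OF f w claimC[OF w L DL n1]])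
  show "ftyp n (act w (SL n L)) = L" using typ_act[OF w SL_sub] typ_SL[OF L] by simp
qed



section \<open>Solomon's theorem for type B, in counting form\<close>

definition FF :: "nat \<Rightarrow> (int \<times> int) set set" where "FF n = {H. isface n H}"
definition Orb :: "nat \<Rightarrow> nat set \<Rightarrow> (int \<times> int) set set" where "Orb n L = {H \<in> FF n. ftyp n H = L}"
definition NN :: "nat \<Rightarrow> nat set \<Rightarrow> nat set \<Rightarrow> (int \<times> int) set \<Rightarrow> nat" where
  "NN n J K H = card {p \<in> Orb n J \<times> Orb n K. fprod (snd p) (fst p) = H}"

lemma finite_FF: "finite (FF n)"
proof -
  have "FF n \<subseteq> Pow (Om n \<times> Om n)" unfolding FF_def using isfaceD(1) by blast
  then show ?thesis by (rule finite_subset) (simp add: finite_Om)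
qed

lemma finite_Orb: "finite (Orb n L)" unfolding Orb_def using finite_FF by simp

lemma finite_sperms: "finite (sperms n)"
proof -
  have "sperms n \<subseteq> {xs. set xs \<subseteq> {- int n..int n} \<and> length xs = n}"
  proof
    fix w assume w: "w \<in> sperms n"
    have "set w \<subseteq> {- int n..int n}"
    proof
      fix x assume "x \<in> set w"
      then obtain k where "k < length w" "w ! k = x" unfolding in_set_conv_nth by blast
      then show "x \<in> {- int n..int n}" using sperms_nth(2)[OF w, of k] sperms_len[OF w] by auto
    qed
    then show "w \<in> {xs. set xs \<subseteq> {- int n..int n} \<and> length xs = n}" using sperms_len[OF w] by simp
  qed
  then show ?thesis by (rule finite_subset) (rule finite_lists_length_eq, simp)
qed

lemma act_Orb:
  assumes v: "v \<in> sperms n" and H: "H \<in> Orb n L"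
  shows "act v H \<in> Orb n L"
  using H act_face[OF v] typ_act[OF v] isfaceD(1) unfolding Orb_def FF_def by auto

lemma act_Orb_perm:
  assumes v: "v \<in> sperms n"
  shows "act v ` Orb n L = Orb n L" "inj_on (act v) (Orb n L)"
proof -
  show i: "inj_on (act v) (Orb n L)"
    by (rule inj_onI) (use act_inj[OF v] isfaceD(1) in \<open>auto simp: Orb_def FF_def\<close>)
  show "act v ` Orb n L = Orb n L"
    by (rule endo_inj_surj[OF finite_Orb _ i]) (use act_Orb[OF v] in blast)
qed

lemma NN_le:
  assumes v: "v \<in> sperms n" and H: "H \<in> FF n"
  shows "NN n J K H \<le> NN n J K (act v H)"
  unfolding NN_def
proof (rule card_inj_on_le)
  let ?f = "\<lambda>p. (act v (fst p), act v (snd p))"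
  show "inj_on ?f {p \<in> Orb n J \<times> Orb n K. fprod (snd p) (fst p) = H}"
  proof (rule inj_onI)
    fix p q assume p: "p \<in> {p \<in> Orb n J \<times> Orb n K. fprod (snd p) (fst p) = H}"
      and q: "q \<in> {p \<in> Orb n J \<times> Orb n K. fprod (snd p) (fst p) = H}" and e: "?f p = ?f q"
    have "act v (fst p) = act v (fst q)" "act v (snd p) = act v (snd q)" using e by auto
    moreover have "fst p \<in> Orb n J" "fst q \<in> Orb n J" "snd p \<in> Orb n K" "snd q \<in> Orb n K" using p q by auto
    ultimately have "fst p = fst q" "snd p = snd q"
      using inj_onD[OF act_Orb_perm(2)[OF v, of J]] inj_onD[OF act_Orb_perm(2)[OF v, of K]] by blast+
    then show "p = q" by (simp add: prod_eq_iff)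
  qed
  show "?f ` {p \<in> Orb n J \<times> Orb n K. fprod (snd p) (fst p) = H} \<subseteq> {p \<in> Orb n J \<times> Orb n K. fprod (snd p) (fst p) = act v H}"
  proof
    fix z assume "z \<in> ?f ` {p \<in> Orb n J \<times> Orb n K. fprod (snd p) (fst p) = H}"
    then obtain F G where FG: "F \<in> Orb n J" "G \<in> Orb n K" "fprod G F = H" "z = (act v F, act v G)" by auto
    have "act v (fprod G F) = fprod (act v G) (act v F)"
      by (rule act_fprod[OF v]) (use FG isfaceD(1) in \<open>auto simp: Orb_def FF_def\<close>)
    then show "z \<in> {p \<in> Orb n J \<times> Orb n K. fprod (snd p) (fst p) = act v H}"
      using FG act_Orb[OF v] by auto
  qed
  show "finite {p \<in> Orb n J \<times> Orb n K. fprod (snd p) (fst p) = act v H}"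
    using finite_Orb by simp
qed

lemma NN_eq:
  assumes v: "v \<in> sperms n" and H: "H \<in> FF n"
  shows "NN n J K (act v H) = NN n J K H"
proof -
  define Ob where "Ob = Orb n (ftyp n H)"
  have HO: "H \<in> Ob" unfolding Ob_def Orb_def using H by simp
  have injO: "inj_on (act v) Ob" unfolding Ob_def by (rule act_Orb_perm(2)[OF v])
  have "(\<Sum>H'\<in>Ob. NN n J K (act v H')) = (\<Sum>H'\<in>act v ` Ob. NN n J K H')"
    by (simp add: sum.reindex[OF injO])
  also have "\<dots> = (\<Sum>H'\<in>Ob. NN n J K H')" unfolding Ob_def act_Orb_perm(1)[OF v] ..
  finally have s: "(\<Sum>H'\<in>Ob. NN n J K H') = (\<Sum>H'\<in>Ob. NN n J K (act v H'))" by simp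
  have "NN n J K H = NN n J K (act v H)"
    by (rule sum_mono_inv[OF s _ HO]) (use NN_le[OF v] finite_Orb in \<open>auto simp: Ob_def Orb_def\<close>)
  then show ?thesis by simp
qed

lemma chain_ch:
  assumes n1: "n \<ge> 1" and w: "w \<in> sperms n" and v: "v \<in> sperms n"
    and J: "J \<subseteq> {..<n}" and K: "K \<subseteq> {..<n}" and DJ: "DesB n w \<subseteq> J" and DK: "DesB n v \<subseteq> K"
  shows "ch n (bcomp w v) = fprod (fprod (act w (act v (SL n K))) (act w (SL n J))) (C0 n)"
proof -
  have C0sub: "C0 n \<subseteq> Om n \<times> Om n" unfolding C0_def by auto
  have Gs: "act v (SL n K) \<subseteq> Om n \<times> Om n" by (rule act_sub[OF v SL_sub])
  have "ch n (bcomp w v) = act w (ch n v)" by (rule ch_bcomp[OF w v])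
  also have "\<dots> = act w (fprod (act v (SL n K)) (C0 n))" using claimC[OF v K DK n1] by simp
  also have "\<dots> = fprod (act w (act v (SL n K))) (act w (C0 n))" by (rule act_fprod[OF w Gs C0sub])
  also have "act w (C0 n) = fprod (act w (SL n J)) (C0 n)" using claimC[OF w J DJ n1] unfolding ch_def by simp
  finally show ?thesis by (simp add: fprod_assoc)
qed

lemma Sigma_filter: "{q \<in> A \<times> B. P (fst q) (snd q)} = Sigma A (\<lambda>a. {b \<in> B. P a b})"
  by auto

definition Zc :: "nat \<Rightarrow> nat set \<Rightarrow> nat set \<Rightarrow> int list \<Rightarrow> nat" where
  "Zc n J K y = card {p \<in> sperms n \<times> sperms n. DesB n (fst p) \<subseteq> J \<and> DesB n (snd p) \<subseteq> K \<and> bcomp (fst p) (snd p) = y}"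

theorem Zc_formula:
  assumes n1: "n \<ge> 1" and J: "J \<subseteq> {..<n}" and K: "K \<subseteq> {..<n}" and y: "y \<in> sperms n"
  shows "Zc n J K y = (\<Sum>L\<in>{L. L \<subseteq> {..<n} \<and> DesB n y \<subseteq> L}. NN n J K (SL n L))"
proof -
  define A where "A = {p \<in> sperms n \<times> sperms n. DesB n (fst p) \<subseteq> J \<and> DesB n (snd p) \<subseteq> K \<and> bcomp (fst p) (snd p) = y}"
  define m1 where "m1 p = (act (fst p) (SL n J), act (snd p) (SL n K))" for p :: "int list \<times> int list"
  define X1 where "X1 = {q \<in> Orb n J \<times> Orb n K. fprod (fprod (act (wof n (fst q)) (snd q)) (fst q)) (C0 n) = ch n y}"
  have inj1: "inj_on m1 A"
  proof (rule inj_onI)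
    fix p q assume p: "p \<in> A" and q: "q \<in> A" and e: "m1 p = m1 q"
    have "fst p = fst q"
      using wof_SL(2)[of "fst p" n J] wof_SL(2)[of "fst q" n J] e p q J n1 unfolding m1_def A_def by auto
    moreover have "snd p = snd q"
      using wof_SL(2)[of "snd p" n K] wof_SL(2)[of "snd q" n K] e p q K n1 unfolding m1_def A_def by auto
    ultimately show "p = q" by (simp add: prod_eq_iff)
  qed
  have img1: "m1 ` A = X1"
  proof
    show "m1 ` A \<subseteq> X1"
    proof
      fix z assume "z \<in> m1 ` A"
      then obtain w v where wv: "w \<in> sperms n" "v \<in> sperms n" "DesB n w \<subseteq> J" "DesB n v \<subseteq> K" "bcomp w v = y"
        "z = (act w (SL n J), act v (SL n K))" unfolding A_def m1_def by auto
      have F: "act w (SL n J) \<in> Orb n J" using wof_SL[OF wv(1) J wv(3) n1] unfolding Orb_def FF_def by simp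
      have G: "act v (SL n K) \<in> Orb n K" using wof_SL[OF wv(2) K wv(4) n1] unfolding Orb_def FF_def by simp
      have wf: "wof n (act w (SL n J)) = w" using wof_SL[OF wv(1) J wv(3) n1] by simp
      show "z \<in> X1" unfolding X1_def using F G wf chain_ch[OF n1 wv(1) wv(2) J K wv(3) wv(4)] wv(5) wv(6) by simp
    qed
  next
    show "X1 \<subseteq> m1 ` A"
    proof
      fix z assume z: "z \<in> X1"
      obtain F G where FG: "z = (F, G)" by (cases z)
      have F: "isface n F" "ftyp n F = J" and G: "isface n G" "ftyp n G = K"
        using z FG unfolding X1_def Orb_def FF_def by auto
      define w where "w = wof n F"
      define v where "v = wof n G"
      have w: "w \<in> sperms n" unfolding w_def by (rule wof(1)[OF F(1)])
      have v: "v \<in> sperms n" unfolding v_def by (rule wof(1)[OF G(1)])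
      have Fe: "F = act w (SL n J)" using claimAB(1)[OF F(1) n1] F(2) unfolding w_def by simp
      have Ge: "G = act v (SL n K)" using claimAB(1)[OF G(1) n1] G(2) unfolding v_def by simp
      have DJ: "DesB n w \<subseteq> J" using claimAB(2)[OF F(1) n1] F(2) unfolding w_def by simp
      have DK: "DesB n v \<subseteq> K" using claimAB(2)[OF G(1) n1] G(2) unfolding v_def by simp
      have "ch n (bcomp w v) = fprod (fprod (act w G) F) (C0 n)"
        using chain_ch[OF n1 w v J K DJ DK] Fe Ge by simp
      also have "\<dots> = ch n y" using z FG unfolding X1_def w_def by simp
      finally have "bcomp w v = y" using ch_inj[OF bcomp_sperms[OF w v] y] by simp
      then have "(w, v) \<in> A" unfolding A_def using w v DJ DK by simp
      moreover have "m1 (w, v) = z" unfolding m1_def using FG Fe Ge by simp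
      ultimately show "z \<in> m1 ` A" by force
    qed
  qed
  have c1: "Zc n J K y = card X1"
    unfolding Zc_def A_def[symmetric] using card_image[OF inj1] img1 by simp
  define X2 where "X2 = {q \<in> Orb n J \<times> Orb n K. fprod (fprod (snd q) (fst q)) (C0 n) = ch n y}"
  have c2: "card X1 = card X2"
  proof -
    have e1: "X1 = Sigma (Orb n J) (\<lambda>F. {G \<in> Orb n K. fprod (fprod (act (wof n F) G) F) (C0 n) = ch n y})"
      unfolding X1_def by (rule Sigma_filter)
    have e2: "X2 = Sigma (Orb n J) (\<lambda>F. {G \<in> Orb n K. fprod (fprod G F) (C0 n) = ch n y})"
      unfolding X2_def by (rule Sigma_filter)
    have fc: "card {G \<in> Orb n K. fprod (fprod (act (wof n F) G) F) (C0 n) = ch n y}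
            = card {G \<in> Orb n K. fprod (fprod G F) (C0 n) = ch n y}" if F: "F \<in> Orb n J" for F
    proof -
      define u where "u = wof n F"
      have u: "u \<in> sperms n" unfolding u_def using wof(1) F unfolding Orb_def FF_def by auto
      have im: "act u ` {G \<in> Orb n K. fprod (fprod (act u G) F) (C0 n) = ch n y}
           = {G \<in> Orb n K. fprod (fprod G F) (C0 n) = ch n y}"
      proof
        show "act u ` {G \<in> Orb n K. fprod (fprod (act u G) F) (C0 n) = ch n y} \<subseteq> {G \<in> Orb n K. fprod (fprod G F) (C0 n) = ch n y}"
          using act_Orb[OF u] by auto
        show "{G \<in> Orb n K. fprod (fprod G F) (C0 n) = ch n y} \<subseteq> act u ` {G \<in> Orb n K. fprod (fprod (act u G) F) (C0 n) = ch n y}"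
        proof
          fix G' assume G': "G' \<in> {G \<in> Orb n K. fprod (fprod G F) (C0 n) = ch n y}"
          then obtain G where "G \<in> Orb n K" "act u G = G'" using act_Orb_perm(1)[OF u, of K] by (metis (no_types, lifting) imageE mem_Collect_eq)
          then show "G' \<in> act u ` {G \<in> Orb n K. fprod (fprod (act u G) F) (C0 n) = ch n y}" using G' by blast
        qed
      qed
      have inj: "inj_on (act u) {G \<in> Orb n K. fprod (fprod (act u G) F) (C0 n) = ch n y}"
        using act_Orb_perm(2)[OF u, of K] by (rule inj_on_subset) blast
      have "card (act u ` {G \<in> Orb n K. fprod (fprod (act u G) F) (C0 n) = ch n y})
          = card {G \<in> Orb n K. fprod (fprod (act u G) F) (C0 n) = ch n y}" by (rule card_image[OF inj])
      then show ?thesis using im unfolding u_def by simp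
    qed
    show ?thesis unfolding e1 e2 using finite_Orb fc by (simp add: card_SigmaI)
  qed
  define HS where "HS = {H \<in> FF n. fprod H (C0 n) = ch n y}"
  define Y where "Y H = {p \<in> Orb n J \<times> Orb n K. fprod (snd p) (fst p) = H}" for H
  have c3: "card X2 = (\<Sum>H\<in>HS. NN n J K H)"
  proof -
    have "X2 = (\<Union>H\<in>HS. Y H)"
    proof
      show "X2 \<subseteq> (\<Union>H\<in>HS. Y H)"
      proof
        fix q assume q: "q \<in> X2"
        then have "isface n (fprod (snd q) (fst q))"
          using fprod_face unfolding X2_def Orb_def FF_def by auto
        then show "q \<in> (\<Union>H\<in>HS. Y H)" using q unfolding X2_def HS_def Y_def FF_def by auto
      qed
      show "(\<Union>H\<in>HS. Y H) \<subseteq> X2" unfolding X2_def HS_def Y_def by auto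
    qed
    moreover have "card (\<Union>H\<in>HS. Y H) = (\<Sum>H\<in>HS. card (Y H))"
      by (rule card_UN_disjoint) (auto simp: HS_def Y_def finite_Orb intro: finite_subset[OF _ finite_FF])
    ultimately show ?thesis unfolding NN_def Y_def by simp
  qed
  define LS where "LS = {L. L \<subseteq> {..<n} \<and> DesB n y \<subseteq> L}"
  have HS_eq: "HS = (\<lambda>L. act y (SL n L)) ` LS"
  proof
    show "HS \<subseteq> (\<lambda>L. act y (SL n L)) ` LS"
    proof
      fix H assume H: "H \<in> HS"
      then have Hf: "isface n H" and e: "fprod H (C0 n) = ch n y" unfolding HS_def FF_def by auto
      have wy: "wof n H = y" by (rule wof_unique[OF Hf y e])
      have "H = act y (SL n (ftyp n H))" using claimAB(1)[OF Hf n1] wy by simp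
      moreover have "ftyp n H \<in> LS" using claimAB(2)[OF Hf n1] wy typ_sub unfolding LS_def by simp
      ultimately show "H \<in> (\<lambda>L. act y (SL n L)) ` LS" by blast
    qed
    show "(\<lambda>L. act y (SL n L)) ` LS \<subseteq> HS"
    proof
      fix H assume "H \<in> (\<lambda>L. act y (SL n L)) ` LS"
      then obtain L where L: "L \<subseteq> {..<n}" "DesB n y \<subseteq> L" "H = act y (SL n L)" unfolding LS_def by auto
      show "H \<in> HS" unfolding HS_def FF_def using wof_SL(1)[OF y L(1,2) n1] claimC[OF y L(1,2) n1] L(3) by simp
    qed
  qed
  have injL: "inj_on (\<lambda>L. act y (SL n L)) LS"
  proof (rule inj_onI)
    fix L L' assume a: "L \<in> LS" "L' \<in> LS" "act y (SL n L) = act y (SL n L')"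
    have e1: "ftyp n (act y (SL n L)) = L" using a(1) wof_SL(3)[OF y _ _ n1] unfolding LS_def by blast
    have e2: "ftyp n (act y (SL n L')) = L'" using a(2) wof_SL(3)[OF y _ _ n1] unfolding LS_def by blast
    have "L = ftyp n (act y (SL n L))" using e1 by (rule sym)
    also have "\<dots> = ftyp n (act y (SL n L'))" using a(3) by (rule arg_cong)
    also have "\<dots> = L'" by (rule e2)
    finally show "L = L'" .
  qed
  have c4: "(\<Sum>H\<in>HS. NN n J K H) = (\<Sum>L\<in>LS. NN n J K (SL n L))"
  proof -
    have "(\<Sum>H\<in>HS. NN n J K H) = (\<Sum>L\<in>LS. NN n J K (act y (SL n L)))"
      unfolding HS_eq by (rule sum.reindex[OF injL, unfolded comp_def])
    also have "\<dots> = (\<Sum>L\<in>LS. NN n J K (SL n L))"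
    proof (rule sum.cong[OF refl])
      fix L assume "L \<in> LS"
      then have "finite L" unfolding LS_def using finite_subset by blast
      then have "SL n L \<in> FF n" unfolding FF_def using SL_face by simp
      then show "NN n J K (act y (SL n L)) = NN n J K (SL n L)" by (rule NN_eq[OF y])
    qed
    finally show ?thesis .
  qed
  show ?thesis using c1 c2 c3 c4 unfolding LS_def by simp
qed



section \<open>Closure of the peak algebra\<close>

definition XB :: "nat \<Rightarrow> nat set \<Rightarrow> int list \<Rightarrow> rat" where
  "XB n J w = (if w \<in> sperms n \<and> DesB n w \<subseteq> J then 1 else 0)"

definition conv :: "nat \<Rightarrow> (int list \<Rightarrow> rat) \<Rightarrow> (int list \<Rightarrow> rat) \<Rightarrow> int list \<Rightarrow> rat" where
  "conv n a b y = (\<Sum>w\<in>sperms n. \<Sum>v\<in>sperms n. if bcomp w v = y then a w * b v else 0)"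

lemma if_add0: "(if c then x + y else 0) = (if c then x else 0) + (if c then y else (0::rat))"
  by simp
lemma if_mult0: "(if c then k * x else 0) = k * (if c then x else (0::rat))"
  by simp

lemma conv_add1: "conv n (\<lambda>w. f w + g w) b = (\<lambda>y. conv n f b y + conv n g b y)"
  by (rule ext) (simp add: conv_def distrib_right if_add0 sum.distrib cong: if_cong)
lemma conv_smult1: "conv n (\<lambda>w. c * f w) b = (\<lambda>y. c * conv n f b y)"
  by (rule ext) (simp add: conv_def mult.assoc if_mult0 sum_distrib_left cong: if_cong)
lemma conv_add2: "conv n a (\<lambda>w. f w + g w) = (\<lambda>y. conv n a f y + conv n a g y)"
  by (rule ext) (simp add: conv_def distrib_left if_add0 sum.distrib cong: if_cong)
lemma conv_smult2: "conv n a (\<lambda>w. c * f w) = (\<lambda>y. c * conv n a f y)"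
  by (rule ext) (simp add: conv_def mult.left_commute if_mult0 sum_distrib_left cong: if_cong)
lemma conv_zero2: "conv n a (\<lambda>w. 0) = (\<lambda>y. 0)"
  by (rule ext) (simp add: conv_def cong: if_cong)
lemma conv_zero1: "conv n (\<lambda>w. 0) b = (\<lambda>y. 0)"
  by (rule ext) (simp add: conv_def cong: if_cong)

lemma XB_sum: "XB n J = (\<lambda>w. \<Sum>G\<in>Pow J. 1 * YB n G w)" if "finite J"
proof
  fix w
  show "XB n J w = (\<Sum>G\<in>Pow J. 1 * YB n G w)"
  proof (cases "w \<in> sperms n \<and> DesB n w \<subseteq> J")
    case True
    have "(\<Sum>G\<in>Pow J. 1 * YB n G w) = (\<Sum>G\<in>Pow J. if G = DesB n w then 1 else 0)"
      unfolding YB_def using True by (intro sum.cong) auto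
    also have "\<dots> = 1" using True that by (simp add: sum.delta')
    finally show ?thesis using True unfolding XB_def by simp
  next
    case False
    have "(\<Sum>G\<in>Pow J. 1 * YB n G w) = 0" unfolding YB_def using False by (intro sum.neutral) auto
    then show ?thesis using False unfolding XB_def by simp
  qed
qed

lemma SigmaB_sub_span:
  assumes n1: "n \<ge> 1" and V: "subsp V" and X: "\<And>K. K \<subseteq> {..<n} \<Longrightarrow> XB n K \<in> V"
  shows "SigmaB n \<subseteq> V"
proof -
  have Y: "YB n J \<in> V" if "J \<in> Pow {..<n}" for J
  proof (rule triangular[OF V _ _ _ that])
    show "G \<in> Pow {..<n}" if "F \<in> Pow {..<n}" "G \<subseteq> F" for F G using that by auto
    show "finite F" if "F \<in> Pow {..<n}" for F using that finite_subset by auto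
    fix F assume F: "F \<in> Pow {..<n}"
    have "finite F" using F finite_subset by auto
    then show "\<exists>a. a F \<noteq> 0 \<and> (\<lambda>u. \<Sum>G\<in>Pow F. a G * YB n G u) \<in> V"
      using X[of F] F XB_sum[of F n] by (intro exI[of _ "\<lambda>G. 1"]) auto
  qed
  show ?thesis
  proof
    fix f assume "f \<in> SigmaB n"
    then obtain c where c: "f = (\<lambda>w. \<Sum>J\<in>Pow {0..n-1}. c J * YB n J w)" unfolding SigmaB_def by blast
    have e: "{0..n-1} = {..<n}" using n1 by auto
    show "f \<in> V" unfolding c e by (rule subsp_sum[OF V]) (use Y in auto)
  qed
qed

lemma XB_in: "XB n J \<in> SigmaB n"
  unfolding SigmaB_cfun cfun_def XB_def by auto

lemma sum_pair_ind:
  assumes "finite A" "finite B"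
  shows "(\<Sum>w\<in>A. \<Sum>v\<in>B. if P w v then 1 else (0::rat)) = of_nat (card {p \<in> A \<times> B. P (fst p) (snd p)})"
proof -
  have "(\<Sum>w\<in>A. \<Sum>v\<in>B. if P w v then 1 else (0::rat)) = (\<Sum>p\<in>A \<times> B. if P (fst p) (snd p) then 1 else 0)"
    by (rule sum.cartesian_product'[symmetric, where g="\<lambda>p. if P (fst p) (snd p) then 1 else (0::rat)", simplified])
  also have "\<dots> = of_nat (card {p \<in> A \<times> B. P (fst p) (snd p)})" by (rule sum_ind) (use assms in simp)
  finally show ?thesis .
qed

lemma conv_XB:
  assumes n1: "n \<ge> 1" and J: "J \<subseteq> {..<n}" and K: "K \<subseteq> {..<n}"
  shows "conv n (XB n J) (XB n K) \<in> SigmaB n"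
proof -
  have cz: "conv n (XB n J) (XB n K) y = of_nat (Zc n J K y)" for y
  proof -
    have "conv n (XB n J) (XB n K) y = (\<Sum>w\<in>sperms n. \<Sum>v\<in>sperms n.
        if DesB n w \<subseteq> J \<and> DesB n v \<subseteq> K \<and> bcomp w v = y then 1 else 0)"
      unfolding conv_def XB_def by (intro sum.cong refl) auto
    also have "\<dots> = of_nat (Zc n J K y)" unfolding Zc_def by (rule sum_pair_ind[OF finite_sperms finite_sperms])
    finally show ?thesis .
  qed
  have Z0: "Zc n J K y = 0" if "y \<notin> sperms n" for y
  proof -
    have "{p \<in> sperms n \<times> sperms n. DesB n (fst p) \<subseteq> J \<and> DesB n (snd p) \<subseteq> K \<and> bcomp (fst p) (snd p) = y} = {}"
      using bcomp_sperms that by auto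
    then show ?thesis unfolding Zc_def by (simp only: card.empty)
  qed
  have ZE: "Zc n J K y = Zc n J K y'" if "y \<in> sperms n" "y' \<in> sperms n" "DesB n y = DesB n y'" for y y'
    using Zc_formula[OF n1 J K that(1)] Zc_formula[OF n1 J K that(2)] that(3) by simp
  have "(\<lambda>y. of_nat (Zc n J K y) :: rat) \<in> cfun (sperms n) (DesB n)"
    unfolding cfun_def
  proof (intro CollectI conjI allI impI ballI)
    fix y assume "y \<notin> sperms n" then show "(of_nat (Zc n J K y) :: rat) = 0" using Z0 by simp
  next
    fix y y' assume "y \<in> sperms n" "y' \<in> sperms n" "DesB n y = DesB n y'"
    then show "(of_nat (Zc n J K y) :: rat) = of_nat (Zc n J K y')" using ZE by metis
  qed
  moreover have "conv n (XB n J) (XB n K) = (\<lambda>y. of_nat (Zc n J K y))" using cz by (rule ext)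
  ultimately show ?thesis unfolding SigmaB_cfun by simp
qed

theorem solomonB:
  assumes n1: "n \<ge> 1" and a: "a \<in> SigmaB n" and b: "b \<in> SigmaB n"
  shows "conv n a b \<in> SigmaB n"
proof -
  have S: "subsp (SigmaB n)" unfolding SigmaB_cfun by (rule subsp_cfun)
  define V1 where "V1 = {b. \<forall>J. J \<subseteq> {..<n} \<longrightarrow> conv n (XB n J) b \<in> SigmaB n}"
  have V1: "subsp V1" unfolding subsp_def V1_def
    using subsp_add[OF S] subsp_smult[OF S] subsp_zero[OF S] by (simp add: conv_add2 conv_smult2 conv_zero2)
  have "SigmaB n \<subseteq> V1" by (rule SigmaB_sub_span[OF n1 V1]) (use conv_XB[OF n1] in \<open>auto simp: V1_def\<close>)
  define V2 where "V2 = {a. \<forall>b\<in>SigmaB n. conv n a b \<in> SigmaB n}"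
  have V2: "subsp V2" unfolding subsp_def V2_def
    using subsp_add[OF S] subsp_smult[OF S] subsp_zero[OF S] by (simp add: conv_add1 conv_smult1 conv_zero1)
  have "SigmaB n \<subseteq> V2" by (rule SigmaB_sub_span[OF n1 V2]) (use \<open>SigmaB n \<subseteq> V1\<close> in \<open>auto simp: V1_def V2_def\<close>)
  then show ?thesis using a b unfolding V2_def by blast
qed

lemma fiber_sum:
  "(\<Sum>u\<in>perms n. \<Sum>w\<in>{w \<in> sperms n. forget w = u}. h w) = (\<Sum>w\<in>sperms n. h w)"
proof -
  have fp: "finite (perms n)"
  proof -
    have "perms n \<subseteq> {xs. set xs \<subseteq> {1..n} \<and> length xs = n}" unfolding perms_def by auto
    then show ?thesis by (rule finite_subset) (rule finite_lists_length_eq, simp)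
  qed
  show ?thesis by (rule sum.group[OF finite_sperms fp]) (use forget_perms in blast)
qed

lemma multA_phi:
  shows "multA n (phi n a) (phi n b) = phi n (conv n a b)"
proof
  fix t
  define H where "H w v = (if compose (forget w) (forget v) = t then a w * b v else 0)" for w v
  have "multA n (phi n a) (phi n b) t
      = (\<Sum>u\<in>perms n. \<Sum>v\<in>perms n. if compose u v = t then phi n a u * phi n b v else 0)"
    unfolding multA_def ..
  also have "\<dots> = (\<Sum>u\<in>perms n. \<Sum>w\<in>{w \<in> sperms n. forget w = u}. \<Sum>v\<in>perms n. \<Sum>w'\<in>{w \<in> sperms n. forget w = v}. H w w')"
  proof (rule sum.cong[OF refl])+
    fix u v assume u: "u \<in> perms n"
    show "(\<Sum>v\<in>perms n. if compose u v = t then phi n a u * phi n b v else 0)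
        = (\<Sum>w\<in>{w \<in> sperms n. forget w = u}. \<Sum>v\<in>perms n. \<Sum>w'\<in>{w \<in> sperms n. forget w = v}. H w w')"
    proof -
      have "(\<Sum>v\<in>perms n. if compose u v = t then phi n a u * phi n b v else 0)
          = (\<Sum>v\<in>perms n. \<Sum>w\<in>{w \<in> sperms n. forget w = u}. \<Sum>w'\<in>{w \<in> sperms n. forget w = v}.
               if compose u v = t then a w * b w' else 0)"
        by (rule sum.cong[OF refl], cases "compose u v = t") (simp_all add: phi_def sum_product)
      also have "\<dots> = (\<Sum>v\<in>perms n. \<Sum>w\<in>{w \<in> sperms n. forget w = u}. \<Sum>w'\<in>{w \<in> sperms n. forget w = v}. H w w')"
        unfolding H_def by (intro sum.cong refl) auto
      also have "\<dots> = (\<Sum>w\<in>{w \<in> sperms n. forget w = u}. \<Sum>v\<in>perms n. \<Sum>w'\<in>{w \<in> sperms n. forget w = v}. H w w')"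
        by (rule sum.swap)
      finally show ?thesis .
    qed
  qed
  also have "\<dots> = (\<Sum>w\<in>sperms n. \<Sum>v\<in>perms n. \<Sum>w'\<in>{w \<in> sperms n. forget w = v}. H w w')"
    by (rule fiber_sum)
  also have "\<dots> = (\<Sum>w\<in>sperms n. \<Sum>w'\<in>sperms n. H w w')"
    by (rule sum.cong[OF refl]) (rule fiber_sum)
  also have "\<dots> = phi n (conv n a b) t"
  proof -
    have "phi n (conv n a b) t = (\<Sum>y\<in>{y \<in> sperms n. forget y = t}. \<Sum>w\<in>sperms n. \<Sum>v\<in>sperms n.
        if bcomp w v = y then a w * b v else 0)" unfolding phi_def conv_def ..
    also have "\<dots> = (\<Sum>w\<in>sperms n. \<Sum>v\<in>sperms n. \<Sum>y\<in>{y \<in> sperms n. forget y = t}.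
        if bcomp w v = y then a w * b v else 0)"
    proof -
      have "(\<Sum>y\<in>{y \<in> sperms n. forget y = t}. \<Sum>w\<in>sperms n. \<Sum>v\<in>sperms n.
          if bcomp w v = y then a w * b v else 0) = (\<Sum>w\<in>sperms n. \<Sum>y\<in>{y \<in> sperms n. forget y = t}. \<Sum>v\<in>sperms n.
          if bcomp w v = y then a w * b v else 0)" by (rule sum.swap)
      also have "\<dots> = (\<Sum>w\<in>sperms n. \<Sum>v\<in>sperms n. \<Sum>y\<in>{y \<in> sperms n. forget y = t}.
          if bcomp w v = y then a w * b v else 0)" by (rule sum.cong[OF refl]) (rule sum.swap)
      finally show ?thesis .
    qed
    also have "\<dots> = (\<Sum>w\<in>sperms n. \<Sum>v\<in>sperms n. H w v)"
    proof (intro sum.cong refl)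
      fix w v assume w: "w \<in> sperms n" and v: "v \<in> sperms n"
      have fin: "finite {y \<in> sperms n. forget y = t}" using finite_sperms by simp
      have "(\<Sum>y\<in>{y \<in> sperms n. forget y = t}. if bcomp w v = y then a w * b v else 0)
          = (if bcomp w v \<in> {y \<in> sperms n. forget y = t} then a w * b v else 0)"
        using fin by (simp add: sum.delta)
      also have "\<dots> = H w v"
        unfolding H_def using bcomp_sperms[OF w v] forget_bcomp[OF w v] by simp
      finally show "(\<Sum>y\<in>{y \<in> sperms n. forget y = t}. if bcomp w v = y then a w * b v else 0) = H w v" .
    qed
    finally show ?thesis by simp
  qed
  finally show "multA n (phi n a) (phi n b) t = phi n (conv n a b) t" .
qed

theorem part_closure:
  assumes n1: "n \<ge> 1"
  shows "\<forall>f\<in>PeakAlg n. \<forall>g\<in>PeakAlg n. multA n f g \<in> PeakAlg n"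
proof (intro ballI)
  fix f g assume f: "f \<in> PeakAlg n" and g: "g \<in> PeakAlg n"
  obtain a where a: "a \<in> SigmaB n" "f = phi n a" using f part_B[OF n1] by blast
  obtain b where b: "b \<in> SigmaB n" "g = phi n b" using g part_B[OF n1] by blast
  have "multA n f g = phi n (conv n a b)" using a b multA_phi by simp
  moreover have "conv n a b \<in> SigmaB n" by (rule solomonB[OF n1 a(1) b(1)])
  ultimately show "multA n f g \<in> PeakAlg n" using part_B[OF n1] by simp
qed

theorem theorem4p2:
  fixes n :: nat
  assumes "n \<ge> 1"
  shows "PeakAlg n \<subseteq> SigmaA n
    \<and> unitA n \<in> PeakAlg n
    \<and> (\<forall>f\<in>PeakAlg n. \<forall>g\<in>PeakAlg n. multA n f g \<in> PeakAlg n)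
    \<and> PeakAlg n = phi n ` SigmaB n
    \<and> PeakAlg n = psi n ` SigmaD n"
  using part_sub part_unit part_closure[OF assms] part_B[OF assms] part_D[OF assms] by blast



end
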